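(* Let $R$ be an almost Dedekind domain and $\mathcal{M}$ its maximal space with the inverse topology. Then: (a) if $\mathcal{M}$ is countable, then $\mathcal{M}$ is scattered; (b) if $\mathcal{M}$ is scattered, then $R$ is SP-scattered.
   Context: $R$ almost Dedekind: $R_M$ is a DVR for each maximal $M$; $K$ quotient field. $\mathcal{M}$ is $\mathrm{Max}(R)$ with the inverse topology (restriction of the coarsest topology on $\mathrm{Spec}(R)$ in which Zariski-open Zariski-compact sets are closed). A space $X$ is scattered if $\partial^\alpha(X)=\emptyset$ for some ordinal $\alpha$, where $\partial^0(X)=X$, $\partial^{\gamma+1}(X)$ is the set of non-isolated points of $\partial^\gamma(X)$, and $\partial^\lambda(X)=\bigcap_{\beta<\lambda}\partial^\beta(X)$ for limit $\lambda$. A maximal ideal $M$ of an almost Dedekind domain $A$ is critical if every finitely generated ideal $J\subseteq M$ satisfies $J\subseteq N^2$ for some maximal $N$; $\mathrm{Crit}(A)$ is the set of these. Recursively: $\mathrm{Crit}_0(R)=\mathrm{Max}(R)$, $T_0=R$; $\mathrm{Crit}_{\gamma+1}(R)=\{P\in\mathrm{Max}(R)\mid PT_\gamma\in\mathrm{Crit}(T_\gamma)\}$; $\mathrm{Crit}_\lambda(R)=\bigcap_{\gamma<\lambda}\mathrm{Crit}_\gamma(R)$ for limit $\lambda$; $T_\alpha=\bigcap\{R_P\mid P\in\mathrm{Crit}_\alpha(R)\}$ ($=K$ if empty). $R$ is SP-scattered if $\mathrm{Crit}_\alpha(R)=\emptyset$ for some ordinal $\alpha$. *)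

theory Defs
  imports "HOL-Analysis.Analysis"
begin

text \<open>Integral domains are represented as subrings of an ambient field of type 'k.
  Ideals, localizations and overrings are subsets of that field.\<close>

definition subring :: "'k::field set \<Rightarrow> bool" where
  "subring A \<longleftrightarrow> 0 \<in> A \<and> 1 \<in> A \<and>
     (\<forall>x\<in>A. \<forall>y\<in>A. x + y \<in> A \<and> x - y \<in> A \<and> x * y \<in> A)"

definition is_ideal :: "'k::field set \<Rightarrow> 'k set \<Rightarrow> bool" where
  "is_ideal A I \<longleftrightarrow> I \<subseteq> A \<and> 0 \<in> I \<and> (\<forall>x\<in>I. \<forall>y\<in>I. x + y \<in> I) \<and>
     (\<forall>a\<in>A. \<forall>x\<in>I. a * x \<in> I)"

definition maximal_ideal :: "'k::field set \<Rightarrow> 'k set \<Rightarrow> bool" where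
  "maximal_ideal A M \<longleftrightarrow> is_ideal A M \<and> M \<noteq> A \<and>
     (\<forall>J. is_ideal A J \<and> M \<subseteq> J \<longrightarrow> J = M \<or> J = A)"

definition max_ideals :: "'k::field set \<Rightarrow> 'k set set" where
  "max_ideals A = {M. maximal_ideal A M}"

definition prime_ideal :: "'k::field set \<Rightarrow> 'k set \<Rightarrow> bool" where
  "prime_ideal A P \<longleftrightarrow> is_ideal A P \<and> P \<noteq> A \<and>
     (\<forall>a\<in>A. \<forall>b\<in>A. a * b \<in> P \<longrightarrow> a \<in> P \<or> b \<in> P)"

definition Spec :: "'k::field set \<Rightarrow> 'k set set" where
  "Spec A = {P. prime_ideal A P}"

definition ideal_gen :: "'k::field set \<Rightarrow> 'k set \<Rightarrow> 'k set" where
  "ideal_gen A S = {x. \<exists>F c. finite F \<and> F \<subseteq> S \<and> (\<forall>f\<in>F. c f \<in> A) \<and>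
                           x = (\<Sum>f\<in>F. c f * f)}"

definition fg_ideal :: "'k::field set \<Rightarrow> 'k set \<Rightarrow> bool" where
  "fg_ideal A J \<longleftrightarrow> (\<exists>F. finite F \<and> F \<subseteq> A \<and> J = ideal_gen A F)"

definition ideal_prod :: "'k::field set \<Rightarrow> 'k set \<Rightarrow> 'k set \<Rightarrow> 'k set" where
  "ideal_prod A I J = ideal_gen A {i * j | i j. i \<in> I \<and> j \<in> J}"

definition principal_ideal_ring :: "'k::field set \<Rightarrow> bool" where
  "principal_ideal_ring A \<longleftrightarrow> (\<forall>I. is_ideal A I \<longrightarrow> (\<exists>a\<in>A. I = ideal_gen A {a}))"

definition localization :: "'k::field set \<Rightarrow> 'k set \<Rightarrow> 'k set" where
  "localization A P = {a / b | a b. a \<in> A \<and> b \<in> A \<and> b \<notin> P}"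

definition DVR :: "'k::field set \<Rightarrow> bool" where
  "DVR V \<longleftrightarrow> subring V \<and> principal_ideal_ring V \<and> (\<exists>!M. maximal_ideal V M) \<and>
     (\<exists>M. maximal_ideal V M \<and> M \<noteq> {0})"

definition almost_Dedekind :: "'k::field set \<Rightarrow> bool" where
  "almost_Dedekind A \<longleftrightarrow> subring A \<and> (\<forall>M\<in>max_ideals A. DVR (localization A M))"

definition has_quotient_field_UNIV :: "'k::field set \<Rightarrow> bool" where
  "has_quotient_field_UNIV A \<longleftrightarrow> (\<forall>x. \<exists>a\<in>A. \<exists>b\<in>A. b \<noteq> 0 \<and> x = a / b)"

definition critical :: "'k::field set \<Rightarrow> 'k set \<Rightarrow> bool" where
  "critical A M \<longleftrightarrow> maximal_ideal A M \<and>
     (\<forall>J. fg_ideal A J \<and> J \<subseteq> M \<longrightarrow> (\<exists>N\<in>max_ideals A. J \<subseteq> ideal_prod A N N))"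

definition Crit :: "'k::field set \<Rightarrow> 'k set set" where
  "Crit A = {M. critical A M}"

definition T_of :: "'k::field set \<Rightarrow> 'k set set \<Rightarrow> 'k set" where
  "T_of R C = (if C = {} then UNIV else (\<Inter>P\<in>C. localization R P))"

definition crit_step :: "'k::field set \<Rightarrow> 'k set set \<Rightarrow> 'k set set" where
  "crit_step R C = {P \<in> max_ideals R. ideal_gen (T_of R C) P \<in> Crit (T_of R C)}"

text \<open>The class of all sets Crit_alpha(R), alpha ordinal: Crit_0 = Max(R); closed under
  the successor step; closed under (nonempty) intersections (limit stages).\<close>
inductive_set crit_tower :: "'k::field set \<Rightarrow> 'k set set set" for R where
  base: "max_ideals R \<in> crit_tower R"
| succ: "C \<in> crit_tower R \<Longrightarrow> crit_step R C \<in> crit_tower R"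
| lim: "(\<And>C. C \<in> \<A> \<Longrightarrow> C \<in> crit_tower R) \<Longrightarrow> \<A> \<noteq> {} \<Longrightarrow> \<Inter>\<A> \<in> crit_tower R"

definition SP_scattered :: "'k::field set \<Rightarrow> bool" where
  "SP_scattered R \<longleftrightarrow> {} \<in> crit_tower R"

definition zariski :: "'k::field set \<Rightarrow> 'k set topology" where
  "zariski A = topology_generated_by {{P \<in> Spec A. \<not> S \<subseteq> P} | S. S \<subseteq> A}"

definition inverse_topology :: "'k::field set \<Rightarrow> 'k set topology" where
  "inverse_topology A = topology_generated_by
     {Spec A - U | U. openin (zariski A) U \<and> compactin (zariski A) U}"

definition max_space :: "'k::field set \<Rightarrow> 'k set topology" where
  "max_space A = subtopology (inverse_topology A) (max_ideals A)"

text \<open>Cantor-Bendixson derivatives: the class of all iterates, built as the least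
  family containing the space, closed under removing isolated points and under
  nonempty intersections (limit stages).\<close>
inductive_set CB_tower :: "'a topology \<Rightarrow> 'a set set" for X where
  base: "topspace X \<in> CB_tower X"
| succ: "S \<in> CB_tower X \<Longrightarrow> S \<inter> (X derived_set_of S) \<in> CB_tower X"
| lim: "(\<And>S. S \<in> \<A> \<Longrightarrow> S \<in> CB_tower X) \<Longrightarrow> \<A> \<noteq> {} \<Longrightarrow> \<Inter>\<A> \<in> CB_tower X"

definition scattered_space :: "'a topology \<Rightarrow> bool" where
  "scattered_space X \<longleftrightarrow> {} \<in> CB_tower X"

end

theory Submission
  imports Defs
begin

lemma subringD:
  assumes "subring A"
  shows "0 \<in> A" "1 \<in> A" "x \<in> A \<Longrightarrow> y \<in> A \<Longrightarrow> x + y \<in> A"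
    "x \<in> A \<Longrightarrow> y \<in> A \<Longrightarrow> x - y \<in> A" "x \<in> A \<Longrightarrow> y \<in> A \<Longrightarrow> x * y \<in> A"
  using assms unfolding subring_def by auto

lemma subring_uminus: "subring A \<Longrightarrow> x \<in> A \<Longrightarrow> -x \<in> A"
  using subringD(1)[of A] subringD(4)[of A 0 x] by simp

lemma subring_sum: assumes "subring A" shows "finite F \<Longrightarrow> (\<forall>f\<in>F. g f \<in> A) \<Longrightarrow> sum g F \<in> A"
  by (induction F rule: finite_induct) (auto intro: subringD[OF assms])

lemma subring_prod: assumes "subring A" shows "finite F \<Longrightarrow> (\<forall>f\<in>F. g f \<in> A) \<Longrightarrow> prod g F \<in> A"
  by (induction F rule: finite_induct) (auto intro: subringD[OF assms])

lemma idealD: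
  assumes "is_ideal A I"
  shows "I \<subseteq> A" "0 \<in> I" "x \<in> I \<Longrightarrow> y \<in> I \<Longrightarrow> x + y \<in> I" "a \<in> A \<Longrightarrow> x \<in> I \<Longrightarrow> a * x \<in> I"
    "a \<in> A \<Longrightarrow> x \<in> I \<Longrightarrow> x * a \<in> I"
  using assms unfolding is_ideal_def by (auto simp: mult.commute)

lemma ideal_sum: assumes "is_ideal A I" shows "finite F \<Longrightarrow> (\<forall>f\<in>F. g f \<in> I) \<Longrightarrow> sum g F \<in> I"
  by (induction F rule: finite_induct) (auto intro: idealD[OF assms])

lemma ideal_one: "is_ideal A I \<Longrightarrow> 1 \<in> I \<Longrightarrow> I = A"
proof -
  assume I: "is_ideal A I" and 1: "1 \<in> I"
  show "I = A"
  proof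
    show "I \<subseteq> A" using idealD(1)[OF I] .
    show "A \<subseteq> I"
    proof
      fix a assume "a \<in> A"
      then have "a * 1 \<in> I" using idealD(4)[OF I _ 1] by blast
      then show "a \<in> I" by simp
    qed
  qed
qed

lemma ideal_uminus: "subring A \<Longrightarrow> is_ideal A I \<Longrightarrow> x \<in> I \<Longrightarrow> -x \<in> I"
  using idealD(4)[of A I "-1" x] subring_uminus[of A 1] subringD(2) by auto

lemma ideal_diff: "subring A \<Longrightarrow> is_ideal A I \<Longrightarrow> x \<in> I \<Longrightarrow> y \<in> I \<Longrightarrow> x - y \<in> I"
  using ideal_uminus[of A I y] idealD(3)[of A I x "-y"] by simp

lemma ideal_genI: "finite F \<Longrightarrow> F \<subseteq> S \<Longrightarrow> (\<forall>f\<in>F. c f \<in> A) \<Longrightarrow> x = (\<Sum>f\<in>F. c f * f) \<Longrightarrow> x \<in> ideal_gen A S"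
  unfolding ideal_gen_def mem_Collect_eq by (intro exI[of _ F] exI[of _ c]) simp

lemma ideal_genE:
  assumes "x \<in> ideal_gen A S"
  obtains F c where "finite F" "F \<subseteq> S" "\<forall>f\<in>F. c f \<in> A" "x = (\<Sum>f\<in>F. c f * f)"
  using assms unfolding ideal_gen_def by blast

lemma ideal_gen_subset: assumes I: "is_ideal A I" and S: "S \<subseteq> I" shows "ideal_gen A S \<subseteq> I"
proof
  fix x assume "x \<in> ideal_gen A S"
  then obtain F c where 1: "finite F" "F \<subseteq> S" "\<forall>f\<in>F. c f \<in> A" "x = (\<Sum>f\<in>F. c f * f)"
    by (rule ideal_genE)
  have "\<forall>f\<in>F. c f * f \<in> I" using 1 S idealD(4)[OF I] by blast
  then show "x \<in> I" using ideal_sum[OF I 1(1)] 1(4) by simp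
qed

lemma ideal_gen_mono: assumes "S \<subseteq> S'" shows "ideal_gen A S \<subseteq> ideal_gen A S'"
proof
  fix x assume "x \<in> ideal_gen A S"
  then obtain F c where 1: "finite F" "F \<subseteq> S" "\<forall>f\<in>F. c f \<in> A" "x = (\<Sum>f\<in>F. c f * f)"
    by (rule ideal_genE)
  then show "x \<in> ideal_gen A S'" using assms by (intro ideal_genI[of F _ c]) auto
qed

lemma ideal_gen_base: "1 \<in> A \<Longrightarrow> x \<in> S \<Longrightarrow> x \<in> ideal_gen A S"
  by (rule ideal_genI[of "{x}" _ "\<lambda>_. 1"]) auto

lemma ideal_gen_ideal:
  assumes A: "subring A" and S: "S \<subseteq> A"
  shows "is_ideal A (ideal_gen A S)"
  unfolding is_ideal_def
proof (intro conjI ballI)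
  show "ideal_gen A S \<subseteq> A"
  proof
    fix x assume "x \<in> ideal_gen A S"
    then obtain F c where 1: "finite F" "F \<subseteq> S" "\<forall>f\<in>F. c f \<in> A" "x = (\<Sum>f\<in>F. c f * f)"
      by (rule ideal_genE)
    have "\<forall>f\<in>F. c f * f \<in> A" using 1 S subringD(5)[OF A] by blast
    then show "x \<in> A" using subring_sum[OF A 1(1)] 1(4) by simp
  qed
  show "0 \<in> ideal_gen A S"
    by (rule ideal_genI[of "{}"]) auto
next
  fix x y assume "x \<in> ideal_gen A S" "y \<in> ideal_gen A S"
  obtain F1 c1 where 1: "finite F1" "F1 \<subseteq> S" "\<forall>f\<in>F1. c1 f \<in> A" "x = (\<Sum>f\<in>F1. c1 f * f)"
    using \<open>x \<in> ideal_gen A S\<close> by (rule ideal_genE)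
  obtain F2 c2 where 2: "finite F2" "F2 \<subseteq> S" "\<forall>f\<in>F2. c2 f \<in> A" "y = (\<Sum>f\<in>F2. c2 f * f)"
    using \<open>y \<in> ideal_gen A S\<close> by (rule ideal_genE)
  define c where "c f = (if f \<in> F1 then c1 f else 0) + (if f \<in> F2 then c2 f else 0)" for f
  have cf: "c f * f = (if f \<in> F1 then c1 f * f else 0) + (if f \<in> F2 then c2 f * f else 0)" for f
    by (simp add: c_def distrib_right)
  have fin: "finite (F1 \<union> F2)" using 1 2 by simp
  have s1: "(F1 \<union> F2) \<inter> F1 = F1" "(F1 \<union> F2) \<inter> F2 = F2" by blast+
  have e1: "(\<Sum>f\<in>F1 \<union> F2. (if f \<in> F1 then c1 f * f else 0)) = x"
    unfolding sum.inter_restrict[OF fin, symmetric] s1 1(4) ..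
  have e2: "(\<Sum>f\<in>F1 \<union> F2. (if f \<in> F2 then c2 f * f else 0)) = y"
    unfolding sum.inter_restrict[OF fin, symmetric] s1 2(4) ..
  have "(\<Sum>f\<in>F1 \<union> F2. c f * f) = x + y"
    unfolding cf sum.distrib e1 e2 ..
  then have "x + y = (\<Sum>f\<in>F1 \<union> F2. c f * f)" by simp
  moreover have "\<forall>f\<in>F1 \<union> F2. c f \<in> A"
    using 1 2 subringD(1,3)[OF A] unfolding c_def by auto
  ultimately show "x + y \<in> ideal_gen A S"
    using 1 2 by (intro ideal_genI[of "F1 \<union> F2" _ c]) auto
next
  fix a x assume a: "a \<in> A" and x: "x \<in> ideal_gen A S"
  obtain F c where 1: "finite F" "F \<subseteq> S" "\<forall>f\<in>F. c f \<in> A" "x = (\<Sum>f\<in>F. c f * f)"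
    using x by (rule ideal_genE)
  have "a * x = (\<Sum>f\<in>F. (a * c f) * f)"
    using 1 by (simp add: sum_distrib_left mult.assoc)
  moreover have "\<forall>f\<in>F. a * c f \<in> A" using 1 a subringD(5)[OF A] by blast
  ultimately show "a * x \<in> ideal_gen A S"
    using 1 by (intro ideal_genI[of F _ "\<lambda>f. a * c f"]) auto
qed

lemma ideal_gen_single:
  assumes "0 \<in> A"
  shows "ideal_gen A {x} = {c * x | c. c \<in> A}"
proof
  show "ideal_gen A {x} \<subseteq> {c * x |c. c \<in> A}"
  proof
    fix y assume "y \<in> ideal_gen A {x}"
    then obtain F c where 1: "finite F" "F \<subseteq> {x}" "\<forall>f\<in>F. c f \<in> A" "y = (\<Sum>f\<in>F. c f * f)"
      by (rule ideal_genE)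
    then have "F = {} \<or> F = {x}" by blast
    then show "y \<in> {c * x |c. c \<in> A}"
    proof
      assume "F = {}" then have "y = 0 * x" using 1 by simp
      then show ?thesis using assms by blast
    next
      assume "F = {x}" then have "y = c x * x" "c x \<in> A" using 1 by auto
      then show ?thesis by blast
    qed
  qed
next
  show "{c * x |c. c \<in> A} \<subseteq> ideal_gen A {x}"
  proof
    fix y assume "y \<in> {c * x |c. c \<in> A}"
    then obtain c where "c \<in> A" "y = c * x" by blast
    then show "y \<in> ideal_gen A {x}" by (intro ideal_genI[of "{x}" _ "\<lambda>_. c"]) auto
  qed
qed

definition addgen :: "'k::field set \<Rightarrow> 'k set \<Rightarrow> 'k \<Rightarrow> 'k set" where
  "addgen R J a = {j + a * r | j r. j \<in> J \<and> r \<in> R}"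

lemma addgen_ideal:
  assumes R: "subring R" and J: "is_ideal R J" and a: "a \<in> R"
  shows "is_ideal R (addgen R J a)" "J \<subseteq> addgen R J a" "a \<in> addgen R J a"
proof -
  show "is_ideal R (addgen R J a)"
    unfolding is_ideal_def addgen_def
  proof (intro conjI ballI)
    show "{j + a * r |j r. j \<in> J \<and> r \<in> R} \<subseteq> R"
      using J a R idealD(1)[OF J] by (auto intro!: subringD(3,5)[OF R])
    show "0 \<in> {j + a * r |j r. j \<in> J \<and> r \<in> R}"
      using idealD(2)[OF J] subringD(1)[OF R] by force
  next
    fix x y assume "x \<in> {j + a * r |j r. j \<in> J \<and> r \<in> R}" "y \<in> {j + a * r |j r. j \<in> J \<and> r \<in> R}"
    then obtain j1 r1 j2 r2 where "x = j1 + a * r1" "j1 \<in> J" "r1 \<in> R" "y = j2 + a * r2" "j2 \<in> J" "r2 \<in> R"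
      by blast
    moreover have "x + y = (j1 + j2) + a * (r1 + r2)" using \<open>x = j1 + a * r1\<close> \<open>y = j2 + a * r2\<close>
      by (simp add: algebra_simps)
    moreover have "j1 + j2 \<in> J" using idealD(3)[OF J] \<open>j1 \<in> J\<close> \<open>j2 \<in> J\<close> by blast
    moreover have "r1 + r2 \<in> R" using subringD(3)[OF R] \<open>r1 \<in> R\<close> \<open>r2 \<in> R\<close> by blast
    ultimately show "x + y \<in> {j + a * r |j r. j \<in> J \<and> r \<in> R}" by blast
  next
    fix b x assume b: "b \<in> R" and "x \<in> {j + a * r |j r. j \<in> J \<and> r \<in> R}"
    then obtain j1 r1 where "x = j1 + a * r1" "j1 \<in> J" "r1 \<in> R" by blast
    moreover have "b * x = (b * j1) + a * (b * r1)" using \<open>x = j1 + a * r1\<close>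
      by (simp add: algebra_simps)
    moreover have "b * j1 \<in> J" using idealD(4)[OF J b] \<open>j1 \<in> J\<close> by blast
    moreover have "b * r1 \<in> R" using subringD(5)[OF R b] \<open>r1 \<in> R\<close> by blast
    ultimately show "b * x \<in> {j + a * r |j r. j \<in> J \<and> r \<in> R}" by blast
  qed
  show "J \<subseteq> addgen R J a"
    unfolding addgen_def using subringD(1)[OF R] by force
  show "a \<in> addgen R J a"
    unfolding addgen_def using subringD(2)[OF R] idealD(2)[OF J] by (intro CollectI exI[of _ 0] exI[of _ 1]) auto
qed

lemma max_imp_prime:
  assumes R: "subring R" and M: "maximal_ideal R M"
  shows "prime_ideal R M"
  unfolding prime_ideal_def
proof (intro conjI ballI impI)
  have J: "is_ideal R M" using M unfolding maximal_ideal_def by auto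
  show "is_ideal R M" by fact
  show "M \<noteq> R" using M unfolding maximal_ideal_def by auto
  fix a b assume a: "a \<in> R" and b: "b \<in> R" and ab: "a * b \<in> M"
  show "a \<in> M \<or> b \<in> M"
  proof (cases "a \<in> M")
    case True then show ?thesis by simp
  next
    case False
    then have "addgen R M a \<noteq> M" using False addgen_ideal(3)[OF R J a] by auto
    then have "addgen R M a = R" using M addgen_ideal[OF R J a] unfolding maximal_ideal_def by auto
    then have "1 \<in> addgen R M a" using subringD(2)[OF R] by simp
    then obtain m r where mr: "1 = m + a * r" "m \<in> M" "r \<in> R" unfolding addgen_def by blast
    have "b = b * (m + a * r)" using mr(1) by simp
    also have "\<dots> = b * m + (a * b) * r" by (simp add: algebra_simps)
    finally have bb: "b = b * m + (a * b) * r" .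
    have "b * m \<in> M" using idealD(4)[OF J b mr(2)] .
    moreover have "(a * b) * r \<in> M" using idealD(5)[OF J mr(3) ab] .
    ultimately have "b * m + (a * b) * r \<in> M" by (rule idealD(3)[OF J])
    then show ?thesis using bb by simp
  qed
qed


lemma prime_idealD:
  assumes "prime_ideal R P"
  shows "is_ideal R P" "P \<noteq> R" "a \<in> R \<Longrightarrow> b \<in> R \<Longrightarrow> a * b \<in> P \<Longrightarrow> a \<in> P \<or> b \<in> P"
  using assms unfolding prime_ideal_def by auto

lemma prime_one: "prime_ideal R P \<Longrightarrow> 1 \<notin> P"
  using ideal_one prime_idealD(1,2) by metis

lemma prime_zero: "prime_ideal R P \<Longrightarrow> 0 \<in> P"
  using prime_idealD(1) idealD(2) by metis

lemma prime_sub: "prime_ideal R P \<Longrightarrow> P \<subseteq> R"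
  using prime_idealD(1) idealD(1) by metis

lemma notin_prime_nonzero: "prime_ideal R P \<Longrightarrow> s \<notin> P \<Longrightarrow> s \<noteq> 0"
  using prime_zero by metis

lemma prime_mult_notin: "prime_ideal R P \<Longrightarrow> a \<in> R \<Longrightarrow> b \<in> R \<Longrightarrow> a \<notin> P \<Longrightarrow> b \<notin> P \<Longrightarrow> a * b \<notin> P"
  using prime_idealD(3) by metis

lemma prime_prod_notin:
  assumes P: "prime_ideal R P" and R: "subring R"
  shows "finite G \<Longrightarrow> (\<forall>g\<in>G. f g \<in> R \<and> f g \<notin> P) \<Longrightarrow> prod f G \<notin> P \<and> prod f G \<in> R"
proof (induction G rule: finite_induct)
  case empty
  then show ?case using prime_one[OF P] subringD(2)[OF R] by simp
next
  case (insert x F)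
  then show ?case using prime_mult_notin[OF P] subringD(5)[OF R] by simp
qed

definition mloc :: "'k::field set \<Rightarrow> 'k set \<Rightarrow> 'k set" where
  "mloc R P = {p / s | p s. p \<in> P \<and> s \<in> R \<and> s \<notin> P}"

lemma locI: "a \<in> R \<Longrightarrow> b \<in> R \<Longrightarrow> b \<notin> P \<Longrightarrow> a / b \<in> localization R P"
  unfolding localization_def by blast

lemma locE:
  assumes "x \<in> localization R P"
  obtains a b where "a \<in> R" "b \<in> R" "b \<notin> P" "x = a / b"
  using assms unfolding localization_def by blast

lemma mlocI: "p \<in> P \<Longrightarrow> b \<in> R \<Longrightarrow> b \<notin> P \<Longrightarrow> p / b \<in> mloc R P"
  unfolding mloc_def by blast

lemma mlocE:
  assumes "x \<in> mloc R P"
  obtains p b where "p \<in> P" "b \<in> R" "b \<notin> P" "x = p / b"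
  using assms unfolding mloc_def by blast

lemma R_sub_loc: assumes "1 \<in> R" "1 \<notin> P" shows "R \<subseteq> localization R P"
proof
  fix x assume "x \<in> R"
  then have "x / 1 \<in> localization R P" using assms by (intro locI) auto
  then show "x \<in> localization R P" by simp
qed

lemma mloc_inter:
  assumes R: "subring R" and P: "prime_ideal R P" and x: "x \<in> R" "x \<in> mloc R P"
  shows "x \<in> P"
proof -
  obtain p b where pb: "p \<in> P" "b \<in> R" "b \<notin> P" "x = p / b" using x(2) by (rule mlocE)
  have "b \<noteq> 0" using notin_prime_nonzero[OF P pb(3)] .
  then have "x * b = p" using pb(4) by simp
  then have "x * b \<in> P" using pb(1) by simp
  then show ?thesis using prime_idealD(3)[OF P x(1) pb(2)] pb(3) by blast
qed

lemma mloc_max: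
  assumes R: "subring R" and P: "prime_ideal R P"
  shows "maximal_ideal (localization R P) (mloc R P)"
proof -
  let ?V = "localization R P"
  have PR: "P \<subseteq> R" using prime_sub[OF P] .
  have I: "is_ideal R P" using prime_idealD(1)[OF P] .
  have nz: "\<And>s. s \<notin> P \<Longrightarrow> s \<noteq> 0" using notin_prime_nonzero[OF P] .
  have one: "1 \<notin> P" "1 \<in> R" using prime_one[OF P] subringD(2)[OF R] by auto
  have id: "is_ideal ?V (mloc R P)"
    unfolding is_ideal_def
  proof (intro conjI ballI)
    show "mloc R P \<subseteq> ?V"
    proof
      fix x assume "x \<in> mloc R P"
      then obtain p b where "p \<in> P" "b \<in> R" "b \<notin> P" "x = p / b" by (rule mlocE)
      then show "x \<in> ?V" using PR locI[of p R b P] by auto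
    qed
    have "0 / 1 \<in> mloc R P" using prime_zero[OF P] one by (intro mlocI) auto
    then show "0 \<in> mloc R P" by simp
  next
    fix x y assume xy: "x \<in> mloc R P" "y \<in> mloc R P"
    obtain p1 b1 where 1: "p1 \<in> P" "b1 \<in> R" "b1 \<notin> P" "x = p1 / b1" using xy(1) by (rule mlocE)
    obtain p2 b2 where 2: "p2 \<in> P" "b2 \<in> R" "b2 \<notin> P" "y = p2 / b2" using xy(2) by (rule mlocE)
    have "x + y = (p1 * b2 + p2 * b1) / (b1 * b2)"
      using 1 2 nz by (simp add: add_frac_eq)
    moreover have "p1 * b2 + p2 * b1 \<in> P"
      using 1 2 idealD(3,5)[OF I] by blast
    moreover have "b1 * b2 \<in> R" "b1 * b2 \<notin> P"
      using 1 2 subringD(5)[OF R] prime_mult_notin[OF P] by auto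
    ultimately show "x + y \<in> mloc R P" using mlocI by simp
  next
    fix a x assume ax: "a \<in> ?V" "x \<in> mloc R P"
    obtain a1 b1 where 1: "a1 \<in> R" "b1 \<in> R" "b1 \<notin> P" "a = a1 / b1" using ax(1) by (rule locE)
    obtain p2 b2 where 2: "p2 \<in> P" "b2 \<in> R" "b2 \<notin> P" "x = p2 / b2" using ax(2) by (rule mlocE)
    have "a * x = (a1 * p2) / (b1 * b2)"
      using 1 2 by simp
    moreover have "a1 * p2 \<in> P"
      using 1 2 idealD(4)[OF I] by blast
    moreover have "b1 * b2 \<in> R" "b1 * b2 \<notin> P"
      using 1 2 subringD(5)[OF R] prime_mult_notin[OF P] by auto
    ultimately show "a * x \<in> mloc R P" using mlocI by simp
  qed
  have oneV: "1 \<in> ?V" using R_sub_loc[OF one(2) one(1)] one(2) by blast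
  have one_notin: "1 \<notin> mloc R P"
  proof
    assume "1 \<in> mloc R P"
    then obtain p b where pb: "p \<in> P" "b \<in> R" "b \<notin> P" "1 = p / b" by (rule mlocE)
    then have "p = b" using nz[OF pb(3)] by (simp add: field_simps)
    then show False using pb by simp
  qed
  show ?thesis
    unfolding maximal_ideal_def
  proof (intro conjI allI impI)
    show "is_ideal ?V (mloc R P)" by (rule id)
    show "mloc R P \<noteq> ?V" using oneV one_notin by blast
    fix J assume J: "is_ideal ?V J \<and> mloc R P \<subseteq> J"
    show "J = mloc R P \<or> J = ?V"
    proof (cases "J \<subseteq> mloc R P")
      case True then show ?thesis using J by blast
    next
      case False
      then obtain x where x: "x \<in> J" "x \<notin> mloc R P" by blast
      then have "x \<in> ?V" using J idealD(1) by blast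
      then obtain a b where ab: "a \<in> R" "b \<in> R" "b \<notin> P" "x = a / b" by (rule locE)
      have aP: "a \<notin> P" using x(2) ab mlocI by metis
      have "b / a \<in> ?V" using ab aP by (intro locI) auto
      then have "(b / a) * x \<in> J" using J x(1) idealD(4) by blast
      moreover have "(b / a) * x = 1" using ab nz[OF aP] nz[OF ab(3)] by simp
      ultimately have "1 \<in> J" by simp
      then show ?thesis using J ideal_one by blast
    qed
  qed
qed

lemma loc_unit:
  assumes R: "subring R" and P: "prime_ideal R P" and x: "x \<in> localization R P" "x \<notin> mloc R P"
  shows "x \<noteq> 0" "inverse x \<in> localization R P"
proof -
  obtain a b where ab: "a \<in> R" "b \<in> R" "b \<notin> P" "x = a / b" using x(1) by (rule locE)
  have aP: "a \<notin> P" using x(2) ab mlocI by metis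
  show "x \<noteq> 0" using ab notin_prime_nonzero[OF P aP] notin_prime_nonzero[OF P ab(3)] by simp
  have "inverse x = b / a" using ab by simp
  then show "inverse x \<in> localization R P" using ab aP by (simp add: locI)
qed


lemma AD_subring: "almost_Dedekind R \<Longrightarrow> subring R"
  unfolding almost_Dedekind_def by auto

lemma max_prime: "almost_Dedekind R \<Longrightarrow> M \<in> max_ideals R \<Longrightarrow> prime_ideal R M"
  using max_imp_prime AD_subring unfolding max_ideals_def by blast

lemma dvr_facts:
  assumes AD: "almost_Dedekind R" and M: "M \<in> max_ideals R"
  shows "subring (localization R M)"
    "\<exists>\<pi>. \<pi> \<in> mloc R M \<and> \<pi> \<noteq> 0 \<and> mloc R M = {e * \<pi> | e. e \<in> localization R M}"
    "\<And>I. is_ideal (localization R M) I \<Longrightarrow> \<exists>q\<in>localization R M. I = {e * q | e. e \<in> localization R M}"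
proof -
  let ?V = "localization R M"
  have R: "subring R" using AD_subring[OF AD] .
  have P: "prime_ideal R M" using max_prime[OF AD M] .
  have D: "DVR ?V" using AD M unfolding almost_Dedekind_def by blast
  then show V: "subring ?V" unfolding DVR_def by blast
  have pir: "principal_ideal_ring ?V" using D unfolding DVR_def by blast
  show pr: "\<And>I. is_ideal ?V I \<Longrightarrow> \<exists>q\<in>?V. I = {e * q | e. e \<in> ?V}"
  proof -
    fix I assume "is_ideal ?V I"
    then obtain q where "q \<in> ?V" "I = ideal_gen ?V {q}" using pir unfolding principal_ideal_ring_def by blast
    then show "\<exists>q\<in>?V. I = {e * q | e. e \<in> ?V}" using ideal_gen_single[OF subringD(1)[OF V]] by blast
  qed
  have mm: "maximal_ideal ?V (mloc R M)" using mloc_max[OF R P] .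
  have uniq: "\<exists>!M'. maximal_ideal ?V M'" using D unfolding DVR_def by blast
  obtain M' where M': "maximal_ideal ?V M'" "M' \<noteq> {0}" using D unfolding DVR_def by blast
  have "M' = mloc R M" using uniq M'(1) mm by blast
  then have nz: "mloc R M \<noteq> {0}" using M'(2) by simp
  have idm: "is_ideal ?V (mloc R M)" using mm unfolding maximal_ideal_def by blast
  obtain q where q: "q \<in> ?V" "mloc R M = {e * q | e. e \<in> ?V}" using pr[OF idm] by blast
  have "q \<in> mloc R M" using q subringD(2)[OF V] by (metis (mono_tags, lifting) mem_Collect_eq mult_1)
  moreover have "q \<noteq> 0"
  proof
    assume "q = 0"
    then have "mloc R M \<subseteq> {0}" using q(2) by auto
    then show False using nz idealD(2)[OF idm] by blast
  qed
  ultimately show "\<exists>\<pi>. \<pi> \<in> mloc R M \<and> \<pi> \<noteq> 0 \<and> mloc R M = {e * \<pi> | e. e \<in> ?V}"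
    using q(2) by blast
qed

lemma dvr_compare:
  assumes AD: "almost_Dedekind R" and M: "M \<in> max_ideals R"
    and x: "x \<in> localization R M" and y: "y \<in> localization R M"
  shows "(\<exists>r\<in>localization R M. y = r * x) \<or> (\<exists>r\<in>localization R M. x = r * y)"
proof -
  let ?V = "localization R M"
  have R: "subring R" using AD_subring[OF AD] .
  have P: "prime_ideal R M" using max_prime[OF AD M] .
  have V: "subring ?V" using dvr_facts(1)[OF AD M] .
  have mm: "maximal_ideal ?V (mloc R M)" using mloc_max[OF R P] .
  have idm: "is_ideal ?V (mloc R M)" using mm unfolding maximal_ideal_def by blast
  have one_notin: "1 \<notin> mloc R M"
    using mm ideal_one[OF idm] unfolding maximal_ideal_def by blast
  define J0 where "J0 = ideal_gen ?V {x}"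
  have J0: "is_ideal ?V J0" unfolding J0_def using ideal_gen_ideal[OF V] x by blast
  have xJ0: "x \<in> J0" unfolding J0_def using ideal_gen_base[OF subringD(2)[OF V]] by blast
  have J0c: "J0 = {c * x | c. c \<in> ?V}" unfolding J0_def using ideal_gen_single[OF subringD(1)[OF V]] .
  define I where "I = addgen ?V J0 y"
  have I: "is_ideal ?V I" "J0 \<subseteq> I" "y \<in> I" unfolding I_def using addgen_ideal[OF V J0 y] by auto
  obtain q where q: "q \<in> ?V" "I = {e * q | e. e \<in> ?V}" using dvr_facts(3)[OF AD M I(1)] by blast
  obtain e1 where e1: "e1 \<in> ?V" "x = e1 * q" using q(2) I(2) xJ0 by blast
  obtain e2 where e2: "e2 \<in> ?V" "y = e2 * q" using q(2) I(3) by blast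
  have "q \<in> I" using q subringD(2)[OF V] by (metis (mono_tags, lifting) mem_Collect_eq mult_1)
  then obtain j r where jr: "q = j + y * r" "j \<in> J0" "r \<in> ?V" unfolding I_def addgen_def by blast
  obtain c where c: "c \<in> ?V" "j = c * x" using jr(2) J0c by blast
  show ?thesis
  proof (cases "q = 0")
    case True
    then have "x = 0 * y" using e1 by simp
    then show ?thesis using subringD(1)[OF V] by blast
  next
    case False
    have "q = (c * e1 + e2 * r) * q" using jr(1) c(2) e1(2) e2(2) by (simp add: algebra_simps)
    then have sum1: "c * e1 + e2 * r = 1" using False by simp
    show ?thesis
    proof (cases "e1 \<in> mloc R M")
      case False
      have u: "e1 \<noteq> 0" "inverse e1 \<in> ?V" using loc_unit[OF R P e1(1) False] by auto
      have "y = (e2 * inverse e1) * x" using e1(2) e2(2) u(1) by simp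
      moreover have "e2 * inverse e1 \<in> ?V" using subringD(5)[OF V e2(1) u(2)] .
      ultimately show ?thesis by blast
    next
      case True
      show ?thesis
      proof (cases "e2 \<in> mloc R M")
        case False
        have u: "e2 \<noteq> 0" "inverse e2 \<in> ?V" using loc_unit[OF R P e2(1) False] by auto
        have "x = (e1 * inverse e2) * y" using e1(2) e2(2) u(1) by simp
        moreover have "e1 * inverse e2 \<in> ?V" using subringD(5)[OF V e1(1) u(2)] .
        ultimately show ?thesis by blast
      next
        case True2: True
        have "c * e1 \<in> mloc R M" using idealD(4)[OF idm c(1) True] .
        moreover have "e2 * r \<in> mloc R M" using idealD(5)[OF idm jr(3) True2] .
        ultimately have "c * e1 + e2 * r \<in> mloc R M" using idealD(3)[OF idm] by blast
        then show ?thesis using sum1 one_notin by simp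
      qed
    qed
  qed
qed

lemma dvr_min:
  assumes AD: "almost_Dedekind R" and M: "M \<in> max_ideals R"
  shows "finite G \<Longrightarrow> G \<noteq> {} \<Longrightarrow> G \<subseteq> localization R M \<Longrightarrow>
    \<exists>g0\<in>G. \<forall>g\<in>G. \<exists>r\<in>localization R M. g = r * g0"
proof (induction G rule: finite_ne_induct)
  case (singleton x)
  have "1 \<in> localization R M" using subringD(2)[OF dvr_facts(1)[OF AD M]] .
  then show ?case by force
next
  case (insert x F)
  let ?V = "localization R M"
  have V: "subring ?V" using dvr_facts(1)[OF AD M] .
  obtain g0 where g0: "g0 \<in> F" "\<forall>g\<in>F. \<exists>r\<in>?V. g = r * g0" using insert by auto
  have "g0 \<in> ?V" "x \<in> ?V" using g0 insert by auto
  then have "(\<exists>r\<in>?V. x = r * g0) \<or> (\<exists>r\<in>?V. g0 = r * x)" using dvr_compare[OF AD M] by blast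
  then show ?case
  proof
    assume "\<exists>r\<in>?V. x = r * g0"
    then show ?thesis using g0 by blast
  next
    assume "\<exists>r\<in>?V. g0 = r * x"
    then obtain r where r: "r \<in> ?V" "g0 = r * x" by blast
    have "\<forall>g\<in>insert x F. \<exists>r\<in>?V. g = r * x"
    proof
      fix g assume "g \<in> insert x F"
      then show "\<exists>r\<in>?V. g = r * x"
      proof
        assume "g = x" then show ?thesis using subringD(2)[OF V] by force
      next
        assume "g \<in> F"
        then obtain r' where r': "r' \<in> ?V" "g = r' * g0" using g0 by blast
        then have "g = (r' * r) * x" using r by simp
        moreover have "r' * r \<in> ?V" using subringD(5)[OF V r'(1) r(1)] .
        ultimately show ?thesis by blast
      qed
    qed
    then show ?thesis by blast
  qed
qed

lemma loc_generator:
  assumes AD: "almost_Dedekind R" and M: "M \<in> max_ideals R"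
    and G: "finite G" "G \<subseteq> R" and a: "a \<in> G" "a \<noteq> 0"
  shows "\<exists>g0\<in>G. \<exists>s\<in>R. s \<notin> M \<and> g0 \<noteq> 0 \<and> (\<forall>g\<in>G. s / g0 * g \<in> R)"
proof -
  let ?V = "localization R M"
  have R: "subring R" using AD_subring[OF AD] .
  have P: "prime_ideal R M" using max_prime[OF AD M] .
  have RV: "R \<subseteq> ?V" using R_sub_loc subringD(2)[OF R] prime_one[OF P] by blast
  obtain g0 where g0: "g0 \<in> G" "\<forall>g\<in>G. \<exists>r\<in>?V. g = r * g0"
    using dvr_min[OF AD M G(1)] a G RV by blast
  have g0nz: "g0 \<noteq> 0" using g0(2) a by force
  have h: "\<forall>g\<in>G. \<exists>\<alpha>. \<exists>\<beta>. \<alpha> \<in> R \<and> \<beta> \<in> R \<and> \<beta> \<notin> M \<and> g = (\<alpha> / \<beta>) * g0"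
  proof
    fix g assume "g \<in> G"
    then obtain r where r: "r \<in> ?V" "g = r * g0" using g0 by blast
    obtain al be where "al \<in> R" "be \<in> R" "be \<notin> M" "r = al / be" using r(1) by (rule locE)
    then show "\<exists>\<alpha>. \<exists>\<beta>. \<alpha> \<in> R \<and> \<beta> \<in> R \<and> \<beta> \<notin> M \<and> g = (\<alpha> / \<beta>) * g0" using r(2) by blast
  qed
  from bchoice[OF h] obtain al where h2: "\<forall>g\<in>G. \<exists>\<beta>. al g \<in> R \<and> \<beta> \<in> R \<and> \<beta> \<notin> M \<and> g = (al g / \<beta>) * g0" ..
  from bchoice[OF h2] obtain be where ab: "\<forall>g\<in>G. al g \<in> R \<and> be g \<in> R \<and> be g \<notin> M \<and> g = (al g / be g) * g0" ..
  define s where "s = prod be G"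
  have s: "s \<notin> M" "s \<in> R" using prime_prod_notin[OF P R G(1), of be] ab unfolding s_def by auto
  have "\<forall>g\<in>G. s / g0 * g \<in> R"
  proof
    fix g assume g: "g \<in> G"
    have bnz: "be g \<noteq> 0" using ab g notin_prime_nonzero[OF P] by blast
    have "s = be g * prod be (G - {g})" unfolding s_def using prod.remove[OF G(1) g] .
    have gg: "g = (al g / be g) * g0" using ab g by blast
    have "s / g0 * g = (be g * prod be (G - {g})) / g0 * ((al g / be g) * g0)"
      using \<open>s = be g * prod be (G - {g})\<close> gg by simp
    also have "\<dots> = al g * prod be (G - {g})" using g0nz bnz by (simp add: field_simps)
    finally have "s / g0 * g = al g * prod be (G - {g})" .
    moreover have "prod be (G - {g}) \<in> R" using prime_prod_notin[OF P R, of "G - {g}" be] ab G(1) by auto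
    ultimately show "s / g0 * g \<in> R" using subringD(5)[OF R] ab g by simp
  qed
  then show ?thesis using g0(1) g0nz s by blast
qed

lemma ideal_zorn:
  assumes R: "subring R" and I: "is_ideal R I" and PI: "\<forall>G. finite G \<and> G \<subseteq> I \<longrightarrow> \<Psi> G"
  shows "\<exists>J. is_ideal R J \<and> I \<subseteq> J \<and> (\<forall>G. finite G \<and> G \<subseteq> J \<longrightarrow> \<Psi> G) \<and>
     (\<forall>J'. is_ideal R J' \<and> J \<subseteq> J' \<and> (\<forall>G. finite G \<and> G \<subseteq> J' \<longrightarrow> \<Psi> G) \<longrightarrow> J' = J)"
proof -
  define \<A> where "\<A> = {J. is_ideal R J \<and> I \<subseteq> J \<and> (\<forall>G. finite G \<and> G \<subseteq> J \<longrightarrow> \<Psi> G)}"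
  have "\<forall>C\<in>chains \<A>. \<exists>U\<in>\<A>. \<forall>X\<in>C. X \<subseteq> U"
  proof
    fix C assume C: "C \<in> chains \<A>"
    show "\<exists>U\<in>\<A>. \<forall>X\<in>C. X \<subseteq> U"
    proof (cases "C = {}")
      case True
      have "I \<in> \<A>" using I PI unfolding \<A>_def by blast
      then show ?thesis using True by blast
    next
      case False
      have sub: "C \<subseteq> \<A>" and ch: "\<forall>A\<in>C. \<forall>B\<in>C. A \<subseteq> B \<or> B \<subseteq> A"
        using C unfolding chains_def chain_subset_def by auto
      have sc: "subset.chain \<A> C" using C unfolding chains_alt_def by blast
      have idC: "\<And>X. X \<in> C \<Longrightarrow> is_ideal R X" using sub unfolding \<A>_def by blast
      have "is_ideal R (\<Union>C)" unfolding is_ideal_def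
      proof (intro conjI ballI)
        show "\<Union>C \<subseteq> R"
        proof
          fix x assume "x \<in> \<Union>C"
          then obtain X where "X \<in> C" "x \<in> X" by blast
          then show "x \<in> R" using idealD(1)[OF idC[OF \<open>X \<in> C\<close>]] by blast
        qed
        obtain X where "X \<in> C" using False by blast
        then show "0 \<in> \<Union>C" using idealD(2)[OF idC[OF \<open>X \<in> C\<close>]] by blast
      next
        fix x y assume "x \<in> \<Union>C" "y \<in> \<Union>C"
        then obtain X Y where XY: "X \<in> C" "Y \<in> C" "x \<in> X" "y \<in> Y" by blast
        have "X \<subseteq> Y \<or> Y \<subseteq> X" using ch XY by blast
        then show "x + y \<in> \<Union>C"
        proof
          assume "X \<subseteq> Y"
          then have "x + y \<in> Y" using idealD(3)[OF idC[OF XY(2)]] XY by blast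
          then show ?thesis using XY by blast
        next
          assume "Y \<subseteq> X"
          then have "x + y \<in> X" using idealD(3)[OF idC[OF XY(1)]] XY by blast
          then show ?thesis using XY by blast
        qed
      next
        fix a x assume ax: "a \<in> R" "x \<in> \<Union>C"
        then obtain X where "X \<in> C" "x \<in> X" by blast
        then have "a * x \<in> X" using idealD(4)[OF idC[OF \<open>X \<in> C\<close>] ax(1)] by blast
        then show "a * x \<in> \<Union>C" using \<open>X \<in> C\<close> by blast
      qed
      moreover have "I \<subseteq> \<Union>C" using False sub unfolding \<A>_def by blast
      moreover have "\<forall>G. finite G \<and> G \<subseteq> \<Union>C \<longrightarrow> \<Psi> G"
      proof (intro allI impI)
        fix G assume G: "finite G \<and> G \<subseteq> \<Union>C"
        have "finite G" "G \<subseteq> \<Union>C" using G by auto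
        then obtain B where "B \<in> C" "G \<subseteq> B"
          using finite_subset_Union_chain[of G C \<A>] False sc by metis
        then have "B \<in> \<A>" using sub by blast
        then show "\<Psi> G" using \<open>G \<subseteq> B\<close> \<open>finite G\<close> unfolding \<A>_def by blast
      qed
      ultimately have "\<Union>C \<in> \<A>" unfolding \<A>_def by blast
      then show ?thesis by blast
    qed
  qed
  from Zorn_Lemma2[OF this] obtain J where J: "J \<in> \<A>" "\<forall>X\<in>\<A>. J \<subseteq> X \<longrightarrow> X = J" by blast
  have "\<forall>J'. is_ideal R J' \<and> J \<subseteq> J' \<and> (\<forall>G. finite G \<and> G \<subseteq> J' \<longrightarrow> \<Psi> G) \<longrightarrow> J' = J"
  proof (intro allI impI)
    fix J' assume h: "is_ideal R J' \<and> J \<subseteq> J' \<and> (\<forall>G. finite G \<and> G \<subseteq> J' \<longrightarrow> \<Psi> G)"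
    have "I \<subseteq> J'" using J(1) h unfolding \<A>_def by blast
    then have "J' \<in> \<A>" using h unfolding \<A>_def by blast
    then show "J' = J" using J(2) h by blast
  qed
  then show ?thesis using J(1) unfolding \<A>_def by blast
qed

lemma exists_max:
  assumes R: "subring R" and I: "is_ideal R I" and one: "1 \<notin> I"
  shows "\<exists>M\<in>max_ideals R. I \<subseteq> M"
proof -
  obtain J where J: "is_ideal R J" "I \<subseteq> J" "\<forall>G. finite G \<and> G \<subseteq> J \<longrightarrow> 1 \<notin> G"
    "\<forall>J'. is_ideal R J' \<and> J \<subseteq> J' \<and> (\<forall>G. finite G \<and> G \<subseteq> J' \<longrightarrow> 1 \<notin> G) \<longrightarrow> J' = J"
  proof -
    have "\<forall>G. finite G \<and> G \<subseteq> I \<longrightarrow> 1 \<notin> G" using one by blast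
    from ideal_zorn[OF R I this] obtain J where
      JJ: "is_ideal R J \<and> I \<subseteq> J \<and> (\<forall>G. finite G \<and> G \<subseteq> J \<longrightarrow> 1 \<notin> G) \<and>
     (\<forall>J'. is_ideal R J' \<and> J \<subseteq> J' \<and> (\<forall>G. finite G \<and> G \<subseteq> J' \<longrightarrow> 1 \<notin> G) \<longrightarrow> J' = J)" ..
    show ?thesis by (rule that[OF JJ[THEN conjunct1] JJ[THEN conjunct2, THEN conjunct1]
      JJ[THEN conjunct2, THEN conjunct2, THEN conjunct1] JJ[THEN conjunct2, THEN conjunct2, THEN conjunct2]])
  qed
  have one_notin: "1 \<notin> J" using J(3)[rule_format, of "{1}"] by auto
  have "maximal_ideal R J"
    unfolding maximal_ideal_def
  proof (intro conjI allI impI)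
    show "is_ideal R J" by fact
    show "J \<noteq> R" using one_notin subringD(2)[OF R] by blast
    fix J' assume J': "is_ideal R J' \<and> J \<subseteq> J'"
    show "J' = J \<or> J' = R"
    proof (cases "1 \<in> J'")
      case True then show ?thesis using ideal_one J' by blast
    next
      case False
      then have "\<forall>G. finite G \<and> G \<subseteq> J' \<longrightarrow> 1 \<notin> G" by blast
      then have "J' = J" using J(4)[rule_format, of J'] J' by blast
      then show ?thesis by simp
    qed
  qed
  then show ?thesis using J(2) unfolding max_ideals_def by blast
qed

lemma prime_avoid_powers:
  assumes R: "subring R" and I: "is_ideal R I" and a: "a \<in> R" and pw: "\<forall>n. a ^ n \<notin> I"
  shows "\<exists>P. prime_ideal R P \<and> I \<subseteq> P \<and> a \<notin> P"
proof -
  let ?\<Psi> = "\<lambda>G. \<forall>x\<in>G. \<forall>n. x \<noteq> a ^ n"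
  obtain J where J: "is_ideal R J" "I \<subseteq> J" "\<forall>G. finite G \<and> G \<subseteq> J \<longrightarrow> ?\<Psi> G"
    "\<forall>J'. is_ideal R J' \<and> J \<subseteq> J' \<and> (\<forall>G. finite G \<and> G \<subseteq> J' \<longrightarrow> ?\<Psi> G) \<longrightarrow> J' = J"
  proof -
    have "\<forall>G. finite G \<and> G \<subseteq> I \<longrightarrow> ?\<Psi> G" using pw by blast
    from ideal_zorn[OF R I this] obtain J where
      JJ: "is_ideal R J \<and> I \<subseteq> J \<and> (\<forall>G. finite G \<and> G \<subseteq> J \<longrightarrow> ?\<Psi> G) \<and>
     (\<forall>J'. is_ideal R J' \<and> J \<subseteq> J' \<and> (\<forall>G. finite G \<and> G \<subseteq> J' \<longrightarrow> ?\<Psi> G) \<longrightarrow> J' = J)" ..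
    show ?thesis by (rule that[OF JJ[THEN conjunct1] JJ[THEN conjunct2, THEN conjunct1]
      JJ[THEN conjunct2, THEN conjunct2, THEN conjunct1] JJ[THEN conjunct2, THEN conjunct2, THEN conjunct2]])
  qed
  have npw: "\<And>n. a ^ n \<notin> J"
  proof
    fix n assume "a ^ n \<in> J"
    then show False using J(3)[rule_format, of "{a ^ n}"] by auto
  qed
  have ext: "\<exists>n. a ^ n \<in> addgen R J x" if x: "x \<in> R" "x \<notin> J" for x
  proof (rule ccontr)
    assume "\<not> (\<exists>n. a ^ n \<in> addgen R J x)"
    then have "\<forall>G. finite G \<and> G \<subseteq> addgen R J x \<longrightarrow> ?\<Psi> G" by blast
    then have "addgen R J x = J" using J(4)[rule_format, of "addgen R J x"] addgen_ideal[OF R J(1) x(1)] by blast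
    then show False using addgen_ideal(3)[OF R J(1) x(1)] x(2) by blast
  qed
  have "prime_ideal R J"
    unfolding prime_ideal_def
  proof (intro conjI ballI impI)
    show "is_ideal R J" by fact
    show "J \<noteq> R" using npw[of 0] subringD(2)[OF R] by auto
    fix x y assume xy: "x \<in> R" "y \<in> R" "x * y \<in> J"
    show "x \<in> J \<or> y \<in> J"
    proof (rule ccontr)
      assume "\<not> (x \<in> J \<or> y \<in> J)"
      then have n: "x \<notin> J" "y \<notin> J" by auto
      obtain n where "a ^ n \<in> addgen R J x" using ext xy(1) n(1) by blast
      then obtain j1 r1 where 1: "a ^ n = j1 + x * r1" "j1 \<in> J" "r1 \<in> R" unfolding addgen_def by blast
      obtain m where "a ^ m \<in> addgen R J y" using ext xy(2) n(2) by blast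
      then obtain j2 r2 where 2: "a ^ m = j2 + y * r2" "j2 \<in> J" "r2 \<in> R" unfolding addgen_def by blast
      have eq: "a ^ (n + m) = j1 * (j2 + y * r2) + j2 * (x * r1) + (x * y) * (r1 * r2)"
        using 1(1) 2(1) by (simp add: power_add algebra_simps)
      have JR: "J \<subseteq> R" using idealD(1)[OF J(1)] .
      have "y * r2 \<in> R" using subringD(5)[OF R xy(2) 2(3)] .
      then have h1: "j2 + y * r2 \<in> R" using subringD(3)[OF R] 2(2) JR by blast
      have h2: "x * r1 \<in> R" using subringD(5)[OF R xy(1) 1(3)] .
      have h3: "r1 * r2 \<in> R" using subringD(5)[OF R 1(3) 2(3)] .
      have k1: "j1 * (j2 + y * r2) \<in> J" using idealD(5)[OF J(1) h1 1(2)] .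
      have k2: "j2 * (x * r1) \<in> J" using idealD(5)[OF J(1) h2 2(2)] .
      have k3: "(x * y) * (r1 * r2) \<in> J" using idealD(5)[OF J(1) h3 xy(3)] .
      have "j1 * (j2 + y * r2) + j2 * (x * r1) \<in> J" using idealD(3)[OF J(1) k1 k2] .
      then have "a ^ (n + m) \<in> J" unfolding eq using idealD(3)[OF J(1) _ k3] by blast
      then show False using npw by blast
    qed
  qed
  moreover have "a \<notin> J" using npw[of 1] by simp
  ultimately show ?thesis using J(2) by blast
qed


definition Dz :: "'k::field set \<Rightarrow> 'k set \<Rightarrow> 'k set set" where
  "Dz R S = {P \<in> Spec R. \<not> S \<subseteq> P}"

definition Vz :: "'k::field set \<Rightarrow> 'k set \<Rightarrow> 'k set set" where
  "Vz R G = {P \<in> Spec R. G \<subseteq> P}"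

lemma zariski_eq: "zariski R = topology_generated_by {Dz R S | S. S \<subseteq> R}"
  unfolding zariski_def Dz_def by simp

lemma Spec_prime: "P \<in> Spec R \<longleftrightarrow> prime_ideal R P"
  unfolding Spec_def by simp

lemma topspace_zariski:
  assumes R: "subring R"
  shows "topspace (zariski R) = Spec R"
proof -
  have "Dz R R = Spec R"
    unfolding Dz_def Spec_def using prime_one subringD(2)[OF R] by blast
  moreover have "\<Union>{Dz R S | S. S \<subseteq> R} \<subseteq> Spec R" unfolding Dz_def by blast
  ultimately have "\<Union>{Dz R S | S. S \<subseteq> R} = Spec R" by blast
  then show ?thesis unfolding zariski_eq by simp
qed

lemma subring_power: "subring R \<Longrightarrow> a \<in> R \<Longrightarrow> a ^ n \<in> R"
  by (induction n) (auto intro: subringD)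

lemma prime_pow:
  assumes P: "prime_ideal R P" and R: "subring R" and a: "a \<in> R"
  shows "a ^ n \<in> P \<Longrightarrow> a \<in> P"
proof (induction n)
  case 0
  then show ?case using prime_one[OF P] by simp
next
  case (Suc n)
  then have "a * a ^ n \<in> P" by simp
  then show ?case using prime_idealD(3)[OF P a subring_power[OF R a]] Suc.IH by blast
qed

lemma zariski_open_basic:
  assumes R: "subring R" and W: "openin (zariski R) W"
  shows "\<forall>P\<in>W. P \<in> Spec R \<and> (\<exists>s\<in>R. s \<notin> P \<and> Dz R {s} \<subseteq> W)"
proof -
  have "generate_topology_on {Dz R S | S. S \<subseteq> R} W"
    using W unfolding zariski_eq by (rule openin_topology_generated_by)
  then show ?thesis
  proof (induction rule: generate_topology_on.induct)
    case Empty
    then show ?case by simp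
  next
    case (Int a b)
    show ?case
    proof
      fix P assume P: "P \<in> a \<inter> b"
      obtain s1 where s1: "s1 \<in> R" "s1 \<notin> P" "Dz R {s1} \<subseteq> a" using Int.IH(1) P by blast
      obtain s2 where s2: "s2 \<in> R" "s2 \<notin> P" "Dz R {s2} \<subseteq> b" using Int.IH(2) P by blast
      have PS: "P \<in> Spec R" using Int.IH(1) P by blast
      have "s1 * s2 \<in> R" using subringD(5)[OF R s1(1) s2(1)] .
      moreover have "s1 * s2 \<notin> P" using prime_mult_notin[of R P s1 s2] PS s1 s2 unfolding Spec_def by blast
      moreover have "Dz R {s1 * s2} \<subseteq> a \<inter> b"
      proof
        fix Q assume Q: "Q \<in> Dz R {s1 * s2}"
        then have QP: "prime_ideal R Q" "s1 * s2 \<notin> Q" unfolding Dz_def Spec_def by auto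
        have "s1 \<notin> Q" using QP idealD(5)[OF prime_idealD(1)[OF QP(1)] s2(1)] by blast
        moreover have "s2 \<notin> Q" using QP idealD(4)[OF prime_idealD(1)[OF QP(1)] s1(1)] by blast
        ultimately have "Q \<in> Dz R {s1}" "Q \<in> Dz R {s2}" using QP unfolding Dz_def Spec_def by auto
        then show "Q \<in> a \<inter> b" using s1 s2 by blast
      qed
      ultimately show "P \<in> Spec R \<and> (\<exists>s\<in>R. s \<notin> P \<and> Dz R {s} \<subseteq> a \<inter> b)" using PS by blast
    qed
  next
    case (UN K)
    show ?case
    proof
      fix P assume "P \<in> \<Union>K"
      then obtain k where k: "k \<in> K" "P \<in> k" by blast
      then obtain s where "s \<in> R" "s \<notin> P" "Dz R {s} \<subseteq> k" "P \<in> Spec R" using UN.IH by blast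
      then show "P \<in> Spec R \<and> (\<exists>s\<in>R. s \<notin> P \<and> Dz R {s} \<subseteq> \<Union>K)" using k by blast
    qed
  next
    case (Basis s)
    then obtain S where S: "S \<subseteq> R" "s = Dz R S" by blast
    show ?case
    proof
      fix P assume "P \<in> s"
      then have P: "P \<in> Spec R" "\<not> S \<subseteq> P" using S unfolding Dz_def by auto
      then obtain t where t: "t \<in> S" "t \<notin> P" by blast
      have "Dz R {t} \<subseteq> Dz R S" unfolding Dz_def using t by blast
      then show "P \<in> Spec R \<and> (\<exists>s'\<in>R. s' \<notin> P \<and> Dz R {s'} \<subseteq> s)" using P t S by blast
    qed
  qed
qed

lemma zariski_down:
  assumes R: "subring R" and W: "openin (zariski R) W" and Q: "Q \<in> W" and x: "x \<in> Spec R" "x \<subseteq> Q"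
  shows "x \<in> W"
proof -
  obtain s where s: "s \<in> R" "s \<notin> Q" "Dz R {s} \<subseteq> W" using zariski_open_basic[OF R W] Q by blast
  have "s \<notin> x" using s x by blast
  then have "x \<in> Dz R {s}" using x unfolding Dz_def by blast
  then show ?thesis using s by blast
qed

lemma Dz_open: "S \<subseteq> R \<Longrightarrow> openin (zariski R) (Dz R S)"
  unfolding zariski_eq by (rule topology_generated_by_Basis) blast

lemma Dz_compact:
  assumes R: "subring R" and a: "a \<in> R"
  shows "compactin (zariski R) (Dz R {a})"
  unfolding compactin_def
proof (intro conjI allI impI)
  show "Dz R {a} \<subseteq> topspace (zariski R)" unfolding topspace_zariski[OF R] Dz_def by blast
  fix \<U> assume U: "(\<forall>U\<in>\<U>. openin (zariski R) U) \<and> Dz R {a} \<subseteq> \<Union>\<U>"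
  have h: "\<forall>P\<in>Dz R {a}. \<exists>s. s \<in> R \<and> s \<notin> P \<and> (\<exists>U\<in>\<U>. Dz R {s} \<subseteq> U)"
  proof
    fix P assume P: "P \<in> Dz R {a}"
    then obtain U where "U \<in> \<U>" "P \<in> U" using U by blast
    then show "\<exists>s. s \<in> R \<and> s \<notin> P \<and> (\<exists>U\<in>\<U>. Dz R {s} \<subseteq> U)"
      using zariski_open_basic[OF R, of U] U by blast
  qed
  from bchoice[OF h] obtain sf where sf: "\<forall>P\<in>Dz R {a}. sf P \<in> R \<and> sf P \<notin> P \<and> (\<exists>U\<in>\<U>. Dz R {sf P} \<subseteq> U)" ..
  define I where "I = ideal_gen R (sf ` Dz R {a})"
  have SR: "sf ` Dz R {a} \<subseteq> R" using sf by blast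
  have I: "is_ideal R I" unfolding I_def using ideal_gen_ideal[OF R SR] .
  have "\<exists>n. a ^ n \<in> I"
  proof (rule ccontr)
    assume "\<not> (\<exists>n. a ^ n \<in> I)"
    then obtain P where P: "prime_ideal R P" "I \<subseteq> P" "a \<notin> P" using prime_avoid_powers[OF R I a] by blast
    then have PD: "P \<in> Dz R {a}" unfolding Dz_def Spec_def by blast
    then have "sf P \<in> I" unfolding I_def using ideal_gen_base[OF subringD(2)[OF R]] by blast
    then show False using P(2) sf PD by blast
  qed
  then obtain n where "a ^ n \<in> I" by blast
  then obtain F c where Fc: "finite F" "F \<subseteq> sf ` Dz R {a}" "\<forall>f\<in>F. c f \<in> R" "a ^ n = (\<Sum>f\<in>F. c f * f)"
    unfolding I_def by (rule ideal_genE)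
  have h2: "\<forall>f\<in>F. \<exists>U. U \<in> \<U> \<and> Dz R {f} \<subseteq> U" using Fc(2) sf by blast
  from bchoice[OF h2] obtain Uf where Uf: "\<forall>f\<in>F. Uf f \<in> \<U> \<and> Dz R {f} \<subseteq> Uf f" ..
  show "\<exists>\<F>. finite \<F> \<and> \<F> \<subseteq> \<U> \<and> Dz R {a} \<subseteq> \<Union>\<F>"
  proof (intro exI conjI)
    show "finite (Uf ` F)" using Fc(1) by simp
    show "Uf ` F \<subseteq> \<U>" using Uf by blast
    show "Dz R {a} \<subseteq> \<Union>(Uf ` F)"
    proof
      fix Q assume Q: "Q \<in> Dz R {a}"
      then have QP: "prime_ideal R Q" "a \<notin> Q" unfolding Dz_def Spec_def by auto
      have "\<exists>f\<in>F. f \<notin> Q"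
      proof (rule ccontr)
        assume "\<not> (\<exists>f\<in>F. f \<notin> Q)"
        then have "\<forall>f\<in>F. c f * f \<in> Q" using idealD(4)[OF prime_idealD(1)[OF QP(1)]] Fc(3) by blast
        then have "a ^ n \<in> Q" unfolding Fc(4) using ideal_sum[OF prime_idealD(1)[OF QP(1)] Fc(1), of "\<lambda>f. c f * f"] by blast
        then show False using prime_pow[OF QP(1) R a] QP(2) by blast
      qed
      then obtain f where f: "f \<in> F" "f \<notin> Q" by blast
      then have "Q \<in> Dz R {f}" using QP unfolding Dz_def Spec_def by blast
      then show "Q \<in> \<Union>(Uf ` F)" using Uf f by blast
    qed
  qed
qed

definition inv_basis :: "'k::field set \<Rightarrow> 'k set set set" where
  "inv_basis A = {Spec A - U | U. openin (zariski A) U \<and> compactin (zariski A) U}"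

lemma inverse_eq: "inverse_topology R = topology_generated_by (inv_basis R)"
  unfolding inverse_topology_def inv_basis_def ..

lemma topspace_inv:
  shows "topspace (inverse_topology R) = Spec R"
proof -
  have "Spec R \<in> inv_basis R" unfolding inv_basis_def
    by (rule CollectI, rule exI[of _ "{}"]) simp
  moreover have "\<Union>(inv_basis R) \<subseteq> Spec R" unfolding inv_basis_def by blast
  ultimately show ?thesis unfolding inverse_eq by auto
qed

lemma Vz_Dz: "Vz R {a} = Spec R - Dz R {a}"
  unfolding Vz_def Dz_def by blast

lemma inv_open_Vz1:
  assumes R: "subring R" and a: "a \<in> R"
  shows "openin (inverse_topology R) (Vz R {a})"
proof -
  have "Vz R {a} \<in> inv_basis R" unfolding inv_basis_def Vz_Dz
    using Dz_open[of "{a}" R] Dz_compact[OF R a] a by blast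
  then show ?thesis unfolding inverse_eq by (rule topology_generated_by_Basis)
qed

lemma inv_open_Vz:
  assumes R: "subring R"
  shows "finite G \<Longrightarrow> G \<subseteq> R \<Longrightarrow> openin (inverse_topology R) (Vz R G)"
proof (induction G rule: finite_induct)
  case empty
  have "Vz R {} = topspace (inverse_topology R)" unfolding topspace_inv Vz_def by blast
  then show ?case by simp
next
  case (insert x F)
  have "Vz R (insert x F) = Vz R {x} \<inter> Vz R F" unfolding Vz_def by blast
  then show ?case using inv_open_Vz1[OF R, of x] insert by auto
qed

lemma inv_open_nbhd:
  assumes R: "subring R" and V: "openin (inverse_topology R) V"
  shows "\<forall>x\<in>V. \<exists>F. finite F \<and> F \<subseteq> x \<and> Vz R F \<subseteq> V"
proof -
  have "generate_topology_on (inv_basis R) V"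
    using V unfolding inverse_eq by (rule openin_topology_generated_by)
  then show ?thesis
  proof (induction rule: generate_topology_on.induct)
    case Empty
    then show ?case by simp
  next
    case (Int a b)
    show ?case
    proof
      fix x assume x: "x \<in> a \<inter> b"
      have xa: "x \<in> a" and xb: "x \<in> b" using x by auto
      have "\<exists>F. finite F \<and> F \<subseteq> x \<and> Vz R F \<subseteq> a" using Int.IH(1) xa by (rule bspec)
      then obtain F1 where F1': "finite F1 \<and> F1 \<subseteq> x \<and> Vz R F1 \<subseteq> a" ..
      have "\<exists>F. finite F \<and> F \<subseteq> x \<and> Vz R F \<subseteq> b" using Int.IH(2) xb by (rule bspec)
      then obtain F2 where F2': "finite F2 \<and> F2 \<subseteq> x \<and> Vz R F2 \<subseteq> b" ..
      have F1: "finite F1" "F1 \<subseteq> x" "Vz R F1 \<subseteq> a" using F1' by auto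
      have F2: "finite F2" "F2 \<subseteq> x" "Vz R F2 \<subseteq> b" using F2' by auto
      have "Vz R (F1 \<union> F2) \<subseteq> a \<inter> b"
      proof
        fix Q assume "Q \<in> Vz R (F1 \<union> F2)"
        then have "Q \<in> Vz R F1" "Q \<in> Vz R F2" unfolding Vz_def by auto
        then show "Q \<in> a \<inter> b" using F1(3) F2(3) by blast
      qed
      moreover have "finite (F1 \<union> F2)" "F1 \<union> F2 \<subseteq> x" using F1 F2 by auto
      ultimately show "\<exists>F. finite F \<and> F \<subseteq> x \<and> Vz R F \<subseteq> a \<inter> b" by blast
    qed
  next
    case (UN K)
    show ?case
    proof
      fix x assume "x \<in> \<Union>K"
      then obtain k where k: "k \<in> K" "x \<in> k" by blast
      have "\<exists>F. finite F \<and> F \<subseteq> x \<and> Vz R F \<subseteq> k" using UN.IH[OF k(1)] k(2) by (rule bspec)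
      then obtain F where F: "finite F \<and> F \<subseteq> x \<and> Vz R F \<subseteq> k" ..
      have "k \<subseteq> \<Union>K" using k(1) by (rule Union_upper)
      then have "Vz R F \<subseteq> \<Union>K" using F by (meson subset_trans)
      then show "\<exists>F. finite F \<and> F \<subseteq> x \<and> Vz R F \<subseteq> \<Union>K" using F by (intro exI[of _ F]) simp
    qed
  next
    case (Basis s)
    then obtain U where U: "openin (zariski R) U" "compactin (zariski R) U" "s = Spec R - U"
      unfolding inv_basis_def by blast
    show ?case
    proof
      fix x assume "x \<in> s"
      then have x: "x \<in> Spec R" "x \<notin> U" unfolding U(3) by auto
      have xR: "x \<subseteq> R" using x(1) prime_sub unfolding Spec_def by blast
      have cov: "U \<subseteq> \<Union>((\<lambda>t. Dz R {t}) ` x)"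
      proof
        fix Q assume Q: "Q \<in> U"
        have "\<not> x \<subseteq> Q" using zariski_down[OF R U(1) Q x(1)] x(2) by blast
        then obtain t where t: "t \<in> x" "t \<notin> Q" by blast
        have "U \<subseteq> Spec R" using openin_subset[OF U(1)] unfolding topspace_zariski[OF R] .
        then have "Q \<in> Spec R" using Q by blast
        then have "Q \<in> Dz R {t}" using t unfolding Dz_def by blast
        then show "Q \<in> \<Union>((\<lambda>t. Dz R {t}) ` x)" using t by blast
      qed
      have op: "\<forall>W\<in>(\<lambda>t. Dz R {t}) ` x. openin (zariski R) W" using Dz_open xR by blast
      have cc: "\<forall>\<U>. (\<forall>W\<in>\<U>. openin (zariski R) W) \<and> U \<subseteq> \<Union>\<U> \<longrightarrow> (\<exists>\<F>. finite \<F> \<and> \<F> \<subseteq> \<U> \<and> U \<subseteq> \<Union>\<F>)"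
        using U(2) unfolding compactin_def by blast
      obtain \<F> where \<F>: "finite \<F>" "\<F> \<subseteq> (\<lambda>t. Dz R {t}) ` x" "U \<subseteq> \<Union>\<F>"
        using cc[rule_format, OF conjI[OF op cov]] by blast
      obtain F where F: "F \<subseteq> x" "finite F" "\<F> = (\<lambda>t. Dz R {t}) ` F"
        using finite_subset_image[OF \<F>(1) \<F>(2)] by blast
      have "Vz R F \<subseteq> s"
      proof
        fix Q assume Q: "Q \<in> Vz R F"
        then have QS: "Q \<in> Spec R" "F \<subseteq> Q" unfolding Vz_def by auto
        have "Q \<notin> U"
        proof
          assume "Q \<in> U"
          moreover have "U \<subseteq> \<Union>((\<lambda>t. Dz R {t}) ` F)" using \<F>(3) F(3) by simp
          ultimately obtain t where "t \<in> F" "Q \<in> Dz R {t}" by blast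
          then show False using QS unfolding Dz_def by blast
        qed
        then show "Q \<in> s" unfolding U(3) using QS by blast
      qed
      then show "\<exists>F. finite F \<and> F \<subseteq> x \<and> Vz R F \<subseteq> s" using F by blast
    qed
  qed
qed

lemma Max_sub_Spec: "subring R \<Longrightarrow> max_ideals R \<subseteq> Spec R"
  unfolding max_ideals_def Spec_def using max_imp_prime by blast

lemma topspace_max: "subring R \<Longrightarrow> topspace (max_space R) = max_ideals R"
  unfolding max_space_def using Max_sub_Spec topspace_inv by auto

lemma max_open_Vz: "subring R \<Longrightarrow> finite G \<Longrightarrow> G \<subseteq> R \<Longrightarrow> openin (max_space R) (Vz R G \<inter> max_ideals R)"
  unfolding max_space_def openin_subtopology using inv_open_Vz by blast

lemma max_open_nbhd:
  assumes R: "subring R" and U: "openin (max_space R) U" and P: "P \<in> U"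
  shows "\<exists>F. finite F \<and> F \<subseteq> P \<and> Vz R F \<inter> max_ideals R \<subseteq> U"
proof -
  obtain V where V: "openin (inverse_topology R) V" "U = V \<inter> max_ideals R"
    using U unfolding max_space_def openin_subtopology by blast
  obtain F where "finite F" "F \<subseteq> P" "Vz R F \<subseteq> V" using inv_open_nbhd[OF R V(1)] P V(2) by blast
  then show ?thesis using V(2) by blast
qed

lemma max_not_sub:
  assumes "maximal_ideal R x" "maximal_ideal R y" "x \<noteq> y"
  shows "\<not> x \<subseteq> y"
  using assms unfolding maximal_ideal_def by blast

lemma max_t1:
  assumes R: "subring R"
  shows "t1_space (max_space R)"
  unfolding t1_space_def
proof (intro ballI impI)
  fix x y assume x: "x \<in> topspace (max_space R)" and y: "y \<in> topspace (max_space R)" and xy: "x \<noteq> y"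
  have mx: "maximal_ideal R x" "maximal_ideal R y" using x y topspace_max[OF R] unfolding max_ideals_def by auto
  obtain a where a: "a \<in> x" "a \<notin> y" using max_not_sub[OF mx xy] by blast
  have aR: "a \<in> R" using a mx(1) unfolding maximal_ideal_def is_ideal_def by blast
  have "openin (max_space R) (Vz R {a} \<inter> max_ideals R)" using max_open_Vz[OF R, of "{a}"] aR by simp
  moreover have "x \<in> Vz R {a} \<inter> max_ideals R" using a mx Max_sub_Spec[OF R] unfolding Vz_def max_ideals_def by blast
  moreover have "y \<notin> Vz R {a} \<inter> max_ideals R" using a unfolding Vz_def by blast
  ultimately show "\<exists>U. openin (max_space R) U \<and> x \<in> U \<and> y \<notin> U" by blast
qed


lemma T_sub_loc: "P \<in> C \<Longrightarrow> T_of R C \<subseteq> localization R P"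
  unfolding T_of_def by auto

lemma R_sub_T:
  assumes R: "subring R" and C: "C \<subseteq> max_ideals R"
  shows "R \<subseteq> T_of R C"
proof (cases "C = {}")
  case True then show ?thesis unfolding T_of_def by simp
next
  case False
  have "\<forall>Q\<in>C. R \<subseteq> localization R Q"
  proof
    fix Q assume "Q \<in> C"
    then have "prime_ideal R Q" using C Max_sub_Spec[OF R] unfolding Spec_def by blast
    then show "R \<subseteq> localization R Q" using R_sub_loc subringD(2)[OF R] prime_one by blast
  qed
  then show ?thesis unfolding T_of_def using False by auto
qed

lemma isolated_not_crit:
  assumes AD: "almost_Dedekind R" and C: "C \<subseteq> max_ideals R" and P: "P \<in> C"
    and iso: "P \<notin> max_space R derived_set_of C"
  shows "ideal_gen (T_of R C) P \<notin> Crit (T_of R C)"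
proof
  assume crit: "ideal_gen (T_of R C) P \<in> Crit (T_of R C)"
  let ?T = "T_of R C"
  let ?V = "localization R P"
  have R: "subring R" using AD_subring[OF AD] .
  have PM: "P \<in> max_ideals R" using P C by blast
  have PP: "prime_ideal R P" using max_prime[OF AD PM] .
  have PR: "P \<subseteq> R" using prime_sub[OF PP] .
  have RT: "R \<subseteq> ?T" using R_sub_T[OF R C] .
  have oneT: "1 \<in> ?T" using RT subringD(2)[OF R] by blast
  have TV: "\<And>Q. Q \<in> C \<Longrightarrow> ?T \<subseteq> localization R Q" using T_sub_loc by blast
  have CS: "\<And>Q. Q \<in> C \<Longrightarrow> prime_ideal R Q" using C max_prime[OF AD] by blast
  have Ptop: "P \<in> topspace (max_space R)" using PM topspace_max[OF R] by simp
  obtain U where U: "openin (max_space R) U" "P \<in> U" "\<forall>y. y \<noteq> P \<longrightarrow> y \<in> C \<longrightarrow> y \<notin> U"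
    using iso Ptop unfolding derived_set_of_def by blast
  obtain F where F: "finite F" "F \<subseteq> P" "Vz R F \<inter> max_ideals R \<subseteq> U"
    using max_open_nbhd[OF R U(1) U(2)] by blast
  have FC: "\<And>Q. Q \<in> C \<Longrightarrow> F \<subseteq> Q \<Longrightarrow> Q = P"
  proof -
    fix Q assume Q: "Q \<in> C" "F \<subseteq> Q"
    then have "Q \<in> Vz R F \<inter> max_ideals R" using C Max_sub_Spec[OF R] unfolding Vz_def by blast
    then have "Q \<in> U" using F(3) by blast
    then show "Q = P" using U(3) Q(1) by blast
  qed
  have FR: "F \<subseteq> R" using F(2) PR by blast
  obtain \<pi> where pi: "\<pi> \<in> mloc R P" "\<pi> \<noteq> 0" "mloc R P = {e * \<pi> | e. e \<in> ?V}"
    using dvr_facts(2)[OF AD PM] by blast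
  obtain t b where tb: "t \<in> P" "b \<in> R" "b \<notin> P" "\<pi> = t / b" using pi(1) by (rule mlocE)
  have bnz: "b \<noteq> 0" using notin_prime_nonzero[OF PP tb(3)] .
  have tpi: "t = \<pi> * b" using tb(4) bnz by simp
  define G where "G = insert t F"
  have G: "finite G" "G \<subseteq> P" "G \<subseteq> ?T" using F tb(1) PR RT unfolding G_def by auto
  have fg: "fg_ideal ?T (ideal_gen ?T G)" unfolding fg_ideal_def using G by blast
  have sub: "ideal_gen ?T G \<subseteq> ideal_gen ?T P" using ideal_gen_mono G(2) by blast
  obtain N where N: "N \<in> max_ideals ?T" "ideal_gen ?T G \<subseteq> ideal_prod ?T N N"
    using crit fg sub unfolding Crit_def critical_def by blast
  have Nid: "is_ideal ?T N" and NT: "N \<noteq> ?T" using N(1) unfolding max_ideals_def maximal_ideal_def by auto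
  have one_N: "1 \<notin> N" using ideal_one[OF Nid] NT by blast
  have NsubT: "N \<subseteq> ?T" using idealD(1)[OF Nid] .
  have N2N: "ideal_prod ?T N N \<subseteq> N"
    unfolding ideal_prod_def
  proof (rule ideal_gen_subset[OF Nid])
    show "{i * j |i j. i \<in> N \<and> j \<in> N} \<subseteq> N"
    proof
      fix x assume "x \<in> {i * j |i j. i \<in> N \<and> j \<in> N}"
      then obtain i j where ij: "x = i * j" "i \<in> N" "j \<in> N" by blast
      have "j \<in> ?T" using ij(3) NsubT by blast
      then show "x \<in> N" using idealD(5)[OF Nid _ ij(2)] ij(1) by blast
    qed
  qed
  have GJ: "G \<subseteq> ideal_gen ?T G" using ideal_gen_base[OF oneT] by blast
  have GN2: "G \<subseteq> ideal_prod ?T N N" using GJ N(2) by blast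
  have GN: "G \<subseteq> N" using GN2 N2N by blast
  have tN2: "t \<in> ideal_prod ?T N N" using GN2 unfolding G_def by blast
  show False
  proof (cases "\<exists>a. a \<in> N \<and> a \<in> R \<and> a \<notin> P")
    case True
    then obtain a where a: "a \<in> N" "a \<in> R" "a \<notin> P" by blast
    have anz: "a \<noteq> 0" using notin_prime_nonzero[OF PP a(3)] .
    define G2 where "G2 = insert a F"
    have G2: "finite G2" "G2 \<subseteq> R" "a \<in> G2" "G2 \<subseteq> N" using F FR a GN unfolding G2_def G_def by auto
    have NR: "is_ideal R (N \<inter> R)"
      unfolding is_ideal_def
    proof (intro conjI ballI)
      show "N \<inter> R \<subseteq> R" by blast
      show "0 \<in> N \<inter> R" using idealD(2)[OF Nid] subringD(1)[OF R] by blast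
    next
      fix x y assume "x \<in> N \<inter> R" "y \<in> N \<inter> R"
      then show "x + y \<in> N \<inter> R" using idealD(3)[OF Nid] subringD(3)[OF R] by blast
    next
      fix r x assume rx: "r \<in> R" "x \<in> N \<inter> R"
      have "r \<in> ?T" using rx(1) RT by blast
      then show "r * x \<in> N \<inter> R" using idealD(4)[OF Nid] subringD(5)[OF R] rx by blast
    qed
    have notin: "\<And>M. M \<in> max_ideals R \<Longrightarrow> \<not> N \<inter> R \<subseteq> M"
    proof
      fix M assume M: "M \<in> max_ideals R" and sM: "N \<inter> R \<subseteq> M"
      obtain g0 s where gs: "g0 \<in> G2" "s \<in> R" "s \<notin> M" "g0 \<noteq> 0" "\<forall>g\<in>G2. s / g0 * g \<in> R"
        using loc_generator[OF AD M G2(1) G2(2) G2(3) anz] by blast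
      have yT: "s / g0 \<in> ?T"
      proof -
        have "\<forall>Q\<in>C. s / g0 \<in> localization R Q"
        proof
          fix Q assume Q: "Q \<in> C"
          have "\<exists>g\<in>G2. g \<notin> Q"
          proof (cases "Q = P")
            case True then show ?thesis using a(3) unfolding G2_def by blast
          next
            case False
            then have "\<not> F \<subseteq> Q" using FC Q by blast
            then show ?thesis unfolding G2_def by blast
          qed
          then obtain g where g: "g \<in> G2" "g \<notin> Q" by blast
          have gnz: "g \<noteq> 0" using notin_prime_nonzero[OF CS[OF Q] g(2)] .
          have "(s / g0 * g) / g \<in> localization R Q" using gs(5) g G2(2) by (intro locI) auto
          then show "s / g0 \<in> localization R Q" using gnz by simp
        qed
        then show ?thesis unfolding T_of_def using P by auto
      qed
      have "s = (s / g0) * g0" using gs(4) by simp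
      moreover have "(s / g0) * g0 \<in> N" using idealD(4)[OF Nid yT] gs(1) G2(4) by blast
      ultimately have "s \<in> N \<inter> R" using gs(2) by simp
      then show False using sM gs(3) by blast
    qed
    have "1 \<in> N \<inter> R"
    proof (rule ccontr)
      assume "1 \<notin> N \<inter> R"
      then obtain M where "M \<in> max_ideals R" "N \<inter> R \<subseteq> M" using exists_max[OF R NR] by blast
      then show False using notin by blast
    qed
    then show False using one_N by blast
  next
    case False
    have V: "subring ?V" using dvr_facts(1)[OF AD PM] .
    have idm: "is_ideal ?V (mloc R P)" using mloc_max[OF R PP] unfolding maximal_ideal_def by blast
    have TVP: "?T \<subseteq> ?V" using TV[OF P] .
    have Nm: "N \<subseteq> mloc R P"
    proof
      fix n assume n: "n \<in> N"
      then have "n \<in> ?V" using NsubT TVP by blast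
      then obtain a d where ad: "a \<in> R" "d \<in> R" "d \<notin> P" "n = a / d" by (rule locE)
      have dnz: "d \<noteq> 0" using notin_prime_nonzero[OF PP ad(3)] .
      have "d \<in> ?T" using ad(2) RT by blast
      then have "n * d \<in> N" using idealD(5)[OF Nid _ n] by blast
      moreover have "n * d = a" using ad(4) dnz by simp
      ultimately have "a \<in> N" by simp
      then have "a \<in> P" using False ad(1) by blast
      then show "n \<in> mloc R P" using ad mlocI by simp
    qed
    obtain F' c where Fc: "finite F'" "F' \<subseteq> {i * j |i j. i \<in> N \<and> j \<in> N}" "\<forall>f\<in>F'. c f \<in> ?T"
      "t = (\<Sum>f\<in>F'. c f * f)"
      using tN2 unfolding ideal_prod_def by (rule ideal_genE)
    have h: "\<forall>f\<in>F'. \<exists>z. z \<in> ?V \<and> f = z * \<pi>\<^sup>2"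
    proof
      fix f assume "f \<in> F'"
      then obtain i j where ij: "f = i * j" "i \<in> N" "j \<in> N" using Fc(2) by blast
      then have "i \<in> mloc R P" "j \<in> mloc R P" using Nm by auto
      then obtain e1 e2 where e: "e1 \<in> ?V" "i = e1 * \<pi>" "e2 \<in> ?V" "j = e2 * \<pi>" using pi(3) by blast
      have "f = (e1 * e2) * \<pi>\<^sup>2" using ij(1) e by (simp add: power2_eq_square algebra_simps)
      moreover have "e1 * e2 \<in> ?V" using subringD(5)[OF V e(1) e(3)] .
      ultimately show "\<exists>z. z \<in> ?V \<and> f = z * \<pi>\<^sup>2" by blast
    qed
    from bchoice[OF h] obtain zf where zf: "\<forall>f\<in>F'. zf f \<in> ?V \<and> f = zf f * \<pi>\<^sup>2" ..
    define z where "z = (\<Sum>f\<in>F'. c f * zf f)"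
    have zV: "z \<in> ?V" unfolding z_def
    proof (rule subring_sum[OF V Fc(1)])
      show "\<forall>f\<in>F'. c f * zf f \<in> ?V" using Fc(3) TVP zf subringD(5)[OF V] by blast
    qed
    have "t = (\<Sum>f\<in>F'. c f * (zf f * \<pi>\<^sup>2))" unfolding Fc(4) using zf by (intro sum.cong) auto
    also have "\<dots> = z * \<pi>\<^sup>2" unfolding z_def by (simp add: sum_distrib_right mult.assoc)
    finally have "\<pi> * b = z * \<pi>\<^sup>2" using tpi by simp
    then have "b = z * \<pi>" using pi(2) by (simp add: power2_eq_square)
    then have "b \<in> mloc R P" using pi(3) zV by blast
    then have "b \<in> P" using mloc_inter[OF R PP tb(2)] by blast
    then show False using tb(3) by blast
  qed
qed

lemma crit_tower_sub: "C \<in> crit_tower R \<Longrightarrow> C \<subseteq> max_ideals R"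
proof (induction rule: crit_tower.induct)
  case base then show ?case by simp
next
  case (succ C) then show ?case unfolding crit_step_def by blast
next
  case (lim \<A>)
  then obtain C where "C \<in> \<A>" by blast
  then show ?case using lim by blast
qed

lemma partb_aux:
  assumes AD: "almost_Dedekind R"
  shows "S \<in> CB_tower (max_space R) \<Longrightarrow> \<exists>C\<in>crit_tower R. C \<subseteq> S"
proof (induction rule: CB_tower.induct)
  case base
  have "max_ideals R \<in> crit_tower R" by (rule crit_tower.base)
  then show ?case using topspace_max[OF AD_subring[OF AD]] by auto
next
  case (succ S)
  then obtain C where C: "C \<in> crit_tower R" "C \<subseteq> S" by blast
  have CM: "C \<subseteq> max_ideals R" using crit_tower_sub[OF C(1)] .
  have C2: "crit_step R C \<in> crit_tower R" using C(1) by (rule crit_tower.succ)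
  have "\<Inter>{C, crit_step R C} \<in> crit_tower R"
    by (rule crit_tower.lim) (use C(1) C2 in auto)
  moreover have "\<Inter>{C, crit_step R C} \<subseteq> S \<inter> (max_space R derived_set_of S)"
  proof
    fix P assume P: "P \<in> \<Inter>{C, crit_step R C}"
    then have PC: "P \<in> C" and Pc: "P \<in> crit_step R C" by auto
    have "P \<in> max_space R derived_set_of C"
    proof (rule ccontr)
      assume "P \<notin> max_space R derived_set_of C"
      then have "ideal_gen (T_of R C) P \<notin> Crit (T_of R C)" using isolated_not_crit[OF AD CM PC] by blast
      then show False using Pc unfolding crit_step_def by blast
    qed
    then have "P \<in> max_space R derived_set_of S" using derived_set_of_mono[OF C(2)] by blast
    then show "P \<in> S \<inter> (max_space R derived_set_of S)" using PC C(2) by blast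
  qed
  ultimately show ?case by blast
next
  case (lim \<A>)
  have h: "\<forall>S\<in>\<A>. \<exists>C. C \<in> crit_tower R \<and> C \<subseteq> S" using lim.IH by blast
  from bchoice[OF h] obtain f where f: "\<forall>S\<in>\<A>. f S \<in> crit_tower R \<and> f S \<subseteq> S" ..
  have "\<Inter>(f ` \<A>) \<in> crit_tower R"
    by (rule crit_tower.lim) (use f lim.hyps in auto)
  moreover have "\<Inter>(f ` \<A>) \<subseteq> \<Inter>\<A>" using f by blast
  ultimately show ?case by blast
qed

lemma partb:
  assumes AD: "almost_Dedekind R" and sc: "scattered_space (max_space R)"
  shows "SP_scattered R"
proof -
  have "{} \<in> CB_tower (max_space R)" using sc unfolding scattered_space_def .
  then obtain C where "C \<in> crit_tower R" "C \<subseteq> {}" using partb_aux[OF AD] by blast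
  then show ?thesis unfolding SP_scattered_def by simp
qed


lemma prime_nonzero_max:
  assumes AD: "almost_Dedekind R" and J: "prime_ideal R J" and M: "M \<in> max_ideals R"
    and JM: "J \<subseteq> M" and j: "j \<in> J" "j \<noteq> 0"
  shows "J = M"
proof -
  let ?V = "localization R M"
  have R: "subring R" using AD_subring[OF AD] .
  have MP: "prime_ideal R M" using max_prime[OF AD M] .
  have V: "subring ?V" using dvr_facts(1)[OF AD M] .
  have JI: "is_ideal R J" using prime_idealD(1)[OF J] .
  have JR: "J \<subseteq> R" using prime_sub[OF J] .
  have nz: "\<And>s. s \<notin> M \<Longrightarrow> s \<noteq> 0" using notin_prime_nonzero[OF MP] .
  have one: "1 \<in> R" "1 \<notin> M" using subringD(2)[OF R] prime_one[OF MP] by auto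
  define p where "p = {a / s | a s. a \<in> J \<and> s \<in> R \<and> s \<notin> M}"
  have pI: "a \<in> J \<Longrightarrow> s \<in> R \<Longrightarrow> s \<notin> M \<Longrightarrow> a / s \<in> p" for a s unfolding p_def by blast
  have pE': "\<exists>a s. a \<in> J \<and> s \<in> R \<and> s \<notin> M \<and> x = a / s" if "x \<in> p" for x
    using that unfolding p_def by blast
  have pid: "is_ideal ?V p"
    unfolding is_ideal_def
  proof (intro conjI ballI)
    show "p \<subseteq> ?V"
    proof
      fix x assume "x \<in> p"
      then obtain a s where "a \<in> J" "s \<in> R" "s \<notin> M" "x = a / s" using pE' by blast
      then show "x \<in> ?V" using JR locI[of a R s M] by auto
    qed
    have "0 / 1 \<in> p" using idealD(2)[OF JI] one by (intro pI) auto
    then show "0 \<in> p" by simp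
  next
    fix x y assume xy: "x \<in> p" "y \<in> p"
    obtain a1 s1 where 1: "a1 \<in> J" "s1 \<in> R" "s1 \<notin> M" "x = a1 / s1" using pE'[OF xy(1)] by blast
    obtain a2 s2 where 2: "a2 \<in> J" "s2 \<in> R" "s2 \<notin> M" "y = a2 / s2" using pE'[OF xy(2)] by blast
    have "x + y = (a1 * s2 + a2 * s1) / (s1 * s2)" using 1 2 nz by (simp add: add_frac_eq)
    moreover have "a1 * s2 + a2 * s1 \<in> J" using 1 2 idealD(3,5)[OF JI] by blast
    moreover have "s1 * s2 \<in> R" "s1 * s2 \<notin> M" using 1 2 subringD(5)[OF R] prime_mult_notin[OF MP] by auto
    ultimately show "x + y \<in> p" using pI by simp
  next
    fix c x assume cx: "c \<in> ?V" "x \<in> p"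
    obtain c1 d1 where 1: "c1 \<in> R" "d1 \<in> R" "d1 \<notin> M" "c = c1 / d1" using cx(1) by (rule locE)
    obtain a2 s2 where 2: "a2 \<in> J" "s2 \<in> R" "s2 \<notin> M" "x = a2 / s2" using pE'[OF cx(2)] by blast
    have "c * x = (c1 * a2) / (d1 * s2)" using 1 2 by simp
    moreover have "c1 * a2 \<in> J" using 1 2 idealD(4)[OF JI] by blast
    moreover have "d1 * s2 \<in> R" "d1 * s2 \<notin> M" using 1 2 subringD(5)[OF R] prime_mult_notin[OF MP] by auto
    ultimately show "c * x \<in> p" using pI by simp
  qed
  obtain q where q: "q \<in> ?V" "p = {e * q | e. e \<in> ?V}" using dvr_facts(3)[OF AD M pid] by blast
  obtain \<pi> where pi: "\<pi> \<in> mloc R M" "\<pi> \<noteq> 0" "mloc R M = {e * \<pi> | e. e \<in> ?V}"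
    using dvr_facts(2)[OF AD M] by blast
  have mm: "maximal_ideal ?V (mloc R M)" using mloc_max[OF R MP] .
  have idm: "is_ideal ?V (mloc R M)" using mm unfolding maximal_ideal_def by blast
  have one_notin: "1 \<notin> mloc R M" using mm ideal_one[OF idm] unfolding maximal_ideal_def by blast
  have qp: "q \<in> p" using q subringD(2)[OF V] by (metis (mono_tags, lifting) mem_Collect_eq mult_1)
  have pm: "p \<subseteq> mloc R M"
  proof
    fix x assume "x \<in> p"
    then obtain a s where "a \<in> J" "s \<in> R" "s \<notin> M" "x = a / s" using pE' by blast
    then show "x \<in> mloc R M" using JM mlocI by (metis subsetD)
  qed
  then have "q \<in> mloc R M" using qp by blast
  then obtain r where r: "r \<in> ?V" "q = r * \<pi>" using pi(3) by blast
  have "\<pi> \<in> p \<or> r \<in> p"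
  proof -
    obtain a b where ab: "a \<in> M" "b \<in> R" "b \<notin> M" "\<pi> = a / b" using pi(1) by (rule mlocE)
    obtain c d where cd: "c \<in> R" "d \<in> R" "d \<notin> M" "r = c / d" using r(1) by (rule locE)
    obtain j' u where ju: "j' \<in> J" "u \<in> R" "u \<notin> M" "q = j' / u" using pE'[OF qp] by blast
    have "c / d * (a / b) = j' / u" using r(2) ab(4) cd(4) ju(4) by (simp add: mult.commute)
    then have "(c * a) * u = j' * (d * b)" using nz[OF ab(3)] nz[OF cd(3)] nz[OF ju(3)]
      by (simp add: field_simps)
    moreover have "d * b \<in> R" using subringD(5)[OF R cd(2) ab(2)] .
    ultimately have "(c * a) * u \<in> J" using idealD(5)[OF JI _ ju(1)] by simp
    moreover have "c * a \<in> R" using subringD(5)[OF R cd(1)] ab(1) prime_sub[OF MP] by blast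
    moreover have "u \<notin> J" using ju(3) JM by blast
    ultimately have "c * a \<in> J" using prime_idealD(3)[OF J _ ju(2)] by blast
    then have "c \<in> J \<or> a \<in> J" using prime_idealD(3)[OF J cd(1)] ab(1) prime_sub[OF MP] by blast
    then show ?thesis
    proof
      assume "c \<in> J" then show ?thesis using pI cd by simp
    next
      assume "a \<in> J" then show ?thesis using pI ab by simp
    qed
  qed
  moreover have "r \<notin> p"
  proof
    assume "r \<in> p"
    then obtain e where e: "e \<in> ?V" "r = e * q" using q(2) by blast
    show False
    proof (cases "q = 0")
      case True
      have "j / 1 \<in> p" using pI[OF j(1) one] .
      then have "j \<in> p" by simp
      then obtain e' where "j = e' * q" using q(2) by blast
      then show False using True j(2) by simp
    next
      case False
      have "q = (e * \<pi>) * q" using r(2) e(2) by (simp add: algebra_simps)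
      then have "e * \<pi> = 1" using False by simp
      moreover have "e * \<pi> \<in> mloc R M" using pi(3) e(1) by blast
      ultimately show False using one_notin by simp
    qed
  qed
  ultimately have "\<pi> \<in> p" by blast
  then have mp: "mloc R M \<subseteq> p"
  proof -
    assume pip: "\<pi> \<in> p"
    show ?thesis
    proof
      fix x assume "x \<in> mloc R M"
      then obtain e where e: "e \<in> ?V" "x = e * \<pi>" using pi(3) by blast
      have "e * \<pi> \<in> p" using idealD(4)[OF pid e(1) pip] .
      then show "x \<in> p" using e(2) by simp
    qed
  qed
  have "M \<subseteq> J"
  proof
    fix m assume m: "m \<in> M"
    have "m / 1 \<in> mloc R M" using m one by (intro mlocI) auto
    then have "m \<in> mloc R M" by simp
    then have "m \<in> p" using mp by blast
    then obtain a s where as: "a \<in> J" "s \<in> R" "s \<notin> M" "m = a / s" using pE' by blast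
    then have "m * s = a" using nz[OF as(3)] by simp
    then have "m * s \<in> J" using as(1) by simp
    moreover have "m \<in> R" using m prime_sub[OF MP] by blast
    moreover have "s \<notin> J" using as(3) JM by blast
    ultimately show "m \<in> J" using prime_idealD(3)[OF J _ as(2)] by blast
  qed
  then show ?thesis using JM by blast
qed

lemma CB_closed:
  assumes t1: "t1_space X"
  shows "S \<in> CB_tower X \<Longrightarrow> closedin X S"
proof (induction rule: CB_tower.induct)
  case base then show ?case by simp
next
  case (succ S) then show ?case using closedin_derived_set_of_gen[OF t1] by (intro closedin_Int) auto
next
  case (lim \<A>) then show ?case by (intro closedin_Inter) auto
qed

lemma CB_fix:
  shows "\<Inter>(CB_tower X) \<in> CB_tower X" "\<Inter>(CB_tower X) \<subseteq> X derived_set_of \<Inter>(CB_tower X)"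
proof -
  have ne: "CB_tower X \<noteq> {}" using CB_tower.base by blast
  show S: "\<Inter>(CB_tower X) \<in> CB_tower X" by (rule CB_tower.lim) (use ne in auto)
  have "\<Inter>(CB_tower X) \<inter> X derived_set_of \<Inter>(CB_tower X) \<in> CB_tower X"
    using S by (rule CB_tower.succ)
  then have "\<Inter>(CB_tower X) \<subseteq> \<Inter>(CB_tower X) \<inter> X derived_set_of \<Inter>(CB_tower X)" by (rule Inter_lower)
  then show "\<Inter>(CB_tower X) \<subseteq> X derived_set_of \<Inter>(CB_tower X)" by blast
qed

lemma chain_fin:
  assumes mono: "\<And>n m. n \<le> m \<Longrightarrow> A n \<subseteq> A m"
  shows "finite G \<Longrightarrow> (\<forall>g\<in>G. \<exists>n. g \<in> A n) \<Longrightarrow> \<exists>n::nat. G \<subseteq> A n"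
proof (induction G rule: finite_induct)
  case empty then show ?case by simp
next
  case (insert x F)
  then obtain m where m: "x \<in> A m" by blast
  obtain n where n: "F \<subseteq> A n" using insert by blast
  have "A m \<subseteq> A (max m n)" "A n \<subseteq> A (max m n)" using mono by auto
  then show ?case using m n by blast
qed

lemma addgen_fin:
  assumes R: "subring R"
  shows "finite G \<Longrightarrow> G \<subseteq> addgen R J x \<Longrightarrow>
    \<exists>H. finite H \<and> H \<subseteq> J \<and> (\<forall>P. is_ideal R P \<and> H \<subseteq> P \<and> x \<in> P \<longrightarrow> G \<subseteq> P)"
proof (induction G rule: finite_induct)
  case empty then show ?case by (intro exI[of _ "{}"]) auto
next
  case (insert g G)
  then obtain H where H: "finite H" "H \<subseteq> J" "\<forall>P. is_ideal R P \<and> H \<subseteq> P \<and> x \<in> P \<longrightarrow> G \<subseteq> P" by auto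
  obtain j r where jr: "g = j + x * r" "j \<in> J" "r \<in> R" using insert(4) unfolding addgen_def by blast
  have "\<forall>P. is_ideal R P \<and> insert j H \<subseteq> P \<and> x \<in> P \<longrightarrow> insert g G \<subseteq> P"
  proof (intro allI impI)
    fix P assume P: "is_ideal R P \<and> insert j H \<subseteq> P \<and> x \<in> P"
    have "x * r \<in> P" using idealD(5)[of R P r x] P jr(3) by blast
    then have "g \<in> P" using jr(1) idealD(3)[of R P j "x * r"] P by blast
    moreover have "G \<subseteq> P" using H(3) P by blast
    ultimately show "insert g G \<subseteq> P" by blast
  qed
  then show ?case using H jr(2) by (intro exI[of _ "insert j H"]) auto
qed


lemma parta:
  assumes AD: "almost_Dedekind R" and cnt: "countable (max_ideals R)"
  shows "scattered_space (max_space R)"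
proof -
  have R: "subring R" using AD_subring[OF AD] .
  let ?X = "max_space R"
  have t1: "t1_space ?X" using max_t1[OF R] .
  define S where "S = \<Inter>(CB_tower ?X)"
  have S_in: "S \<in> CB_tower ?X" unfolding S_def by (rule CB_fix(1))
  have Sd: "S \<subseteq> ?X derived_set_of S" unfolding S_def by (rule CB_fix(2))
  have Scl: "closedin ?X S" using CB_closed[OF t1 S_in] .
  have SM: "S \<subseteq> max_ideals R" using closedin_subset[OF Scl] topspace_max[OF R] by simp
  have SMx: "\<And>P. P \<in> S \<Longrightarrow> maximal_ideal R P" using SM unfolding max_ideals_def by blast
  have SSp: "\<And>P. P \<in> S \<Longrightarrow> P \<in> Spec R" using SM Max_sub_Spec[OF R] by blast
  have SR: "\<And>P. P \<in> S \<Longrightarrow> P \<subseteq> R" using SSp prime_sub unfolding Spec_def by blast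
  have Sid: "\<And>P. P \<in> S \<Longrightarrow> is_ideal R P" using SMx unfolding maximal_ideal_def by blast
  have "S = {}"
  proof (rule ccontr)
    assume ne: "S \<noteq> {}"
    have cS: "countable S" using countable_subset[OF SM cnt] .
    define s where "s = from_nat_into S"
    have rs: "range s = S" unfolding s_def using range_from_nat_into[OF ne cS] .
    have sS: "\<And>n. s n \<in> S" using rs by blast
    obtain P0 where P0: "P0 \<in> S" using ne by blast
    have P0M: "P0 \<in> max_ideals R" using P0 SM by blast
    obtain \<pi> where pi: "\<pi> \<in> mloc R P0" "\<pi> \<noteq> 0"
      using dvr_facts(2)[OF AD P0M] by blast
    obtain f0 b0 where fb: "f0 \<in> P0" "b0 \<in> R" "b0 \<notin> P0" "\<pi> = f0 / b0" using pi(1) by (rule mlocE)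
    have f0nz: "f0 \<noteq> 0" using fb(4) pi(2) by auto
    define \<Phi> where "\<Phi> n p q \<longleftrightarrow> finite (fst q) \<and> fst q \<subseteq> snd q \<and> snd q \<in> S \<and> fst p \<subseteq> fst q \<and> \<not> fst q \<subseteq> s n"
      for n :: nat and p q :: "'a set \<times> 'a set"
    have step: "\<exists>q. \<Phi> n p q" if p: "finite (fst p)" "fst p \<subseteq> snd p" "snd p \<in> S" for n p
    proof -
      let ?F = "fst p" and ?P = "snd p"
      have FR: "?F \<subseteq> R" using p SR by blast
      have U: "openin ?X (Vz R ?F \<inter> max_ideals R)" using max_open_Vz[OF R p(1) FR] .
      have PU: "?P \<in> Vz R ?F \<inter> max_ideals R" using p SSp SM unfolding Vz_def by blast
      have "?P \<in> ?X derived_set_of S" using Sd p(3) by blast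
      then obtain y where y: "y \<noteq> ?P" "y \<in> S" "y \<in> Vz R ?F \<inter> max_ideals R"
        using U PU unfolding derived_set_of_def by blast
      obtain Z where Z: "Z \<in> S" "Z \<in> Vz R ?F" "Z \<noteq> s n"
      proof (cases "?P = s n")
        case True then show ?thesis using that y by blast
      next
        case False then show ?thesis using that PU p(3) by blast
      qed
      have "\<not> Z \<subseteq> s n" using max_not_sub[OF SMx[OF Z(1)] SMx[OF sS[of n]] Z(3)] .
      then obtain x where x: "x \<in> Z" "x \<notin> s n" by blast
      have FZ: "?F \<subseteq> Z" using Z(2) unfolding Vz_def by blast
      have "\<Phi> n p (insert x ?F, Z)" unfolding \<Phi>_def using p(1) FZ x Z(1) by auto
      then show ?thesis by blast
    qed
    define seq where "seq = rec_nat ({f0}, P0) (\<lambda>n p. SOME q. \<Phi> n p q)"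
    have seq0: "seq 0 = ({f0}, P0)" unfolding seq_def by simp
    have seqS: "seq (Suc n) = (SOME q. \<Phi> n (seq n) q)" for n unfolding seq_def by simp
    have inv: "finite (fst (seq n)) \<and> fst (seq n) \<subseteq> snd (seq n) \<and> snd (seq n) \<in> S" for n
    proof (induction n)
      case 0 then show ?case using seq0 fb(1) P0 by simp
    next
      case (Suc n)
      have "\<Phi> n (seq n) (seq (Suc n))" unfolding seqS using someI_ex[OF step] Suc by blast
      then show ?case unfolding \<Phi>_def by blast
    qed
    have phi: "\<Phi> n (seq n) (seq (Suc n))" for n unfolding seqS using someI_ex[OF step] inv by blast
    define Ff where "Ff n = fst (seq n)" for n
    have FfS: "Ff (Suc n) \<supseteq> Ff n" "\<not> Ff (Suc n) \<subseteq> s n" for n using phi[of n] unfolding \<Phi>_def Ff_def by auto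
    have mono: "n \<le> m \<Longrightarrow> Ff n \<subseteq> Ff m" for n m
      using lift_Suc_mono_le[of Ff n m] FfS(1) by blast
    have FfP: "Ff n \<subseteq> snd (seq n)" "snd (seq n) \<in> S" "finite (Ff n)" for n using inv[of n] unfolding Ff_def by auto
    define UU where "UU = \<Union>(range Ff)"
    have UUR: "UU \<subseteq> R" unfolding UU_def using FfP SR by blast
    define J0 where "J0 = ideal_gen R UU"
    have J0: "is_ideal R J0" unfolding J0_def using ideal_gen_ideal[OF R UUR] .
    have UUJ0: "UU \<subseteq> J0" unfolding J0_def using ideal_gen_base[OF subringD(2)[OF R]] by blast
    define \<Psi> where "\<Psi> G \<longleftrightarrow> (\<exists>P\<in>S. G \<subseteq> P)" for G
    have J0\<Psi>: "\<forall>G. finite G \<and> G \<subseteq> J0 \<longrightarrow> \<Psi> G"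
    proof (intro allI impI)
      fix G assume G: "finite G \<and> G \<subseteq> J0"
      have "\<forall>g\<in>G. \<exists>n. g \<in> ideal_gen R (Ff n)"
      proof
        fix g assume "g \<in> G"
        then have "g \<in> ideal_gen R UU" using G unfolding J0_def by blast
        then obtain F c where Fc: "finite F" "F \<subseteq> UU" "\<forall>f\<in>F. c f \<in> R" "g = (\<Sum>f\<in>F. c f * f)"
          by (rule ideal_genE)
        have "\<forall>f\<in>F. \<exists>n. f \<in> Ff n" using Fc(2) unfolding UU_def by blast
        then obtain n where "F \<subseteq> Ff n" using chain_fin[of Ff, OF mono Fc(1)] by blast
        then have "g \<in> ideal_gen R (Ff n)" using Fc by (intro ideal_genI[of F _ c]) auto
        then show "\<exists>n. g \<in> ideal_gen R (Ff n)" by blast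
      qed
      moreover have "\<And>n m. n \<le> m \<Longrightarrow> ideal_gen R (Ff n) \<subseteq> ideal_gen R (Ff m)"
        using mono ideal_gen_mono by blast
      ultimately obtain N where N: "G \<subseteq> ideal_gen R (Ff N)"
        using chain_fin[of "\<lambda>n. ideal_gen R (Ff n)"] G by blast
      have "ideal_gen R (Ff N) \<subseteq> snd (seq N)" using ideal_gen_subset[OF Sid[OF FfP(2)] FfP(1)] .
      then show "\<Psi> G" unfolding \<Psi>_def using N FfP(2) by blast
    qed
    obtain J where J1: "is_ideal R J" and J2: "J0 \<subseteq> J" and J3: "\<forall>G. finite G \<and> G \<subseteq> J \<longrightarrow> \<Psi> G"
      and J4: "\<forall>J'. is_ideal R J' \<and> J \<subseteq> J' \<and> (\<forall>G. finite G \<and> G \<subseteq> J' \<longrightarrow> \<Psi> G) \<longrightarrow> J' = J"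
    proof -
      from ideal_zorn[OF R J0 J0\<Psi>] obtain J where
        JJ: "is_ideal R J \<and> J0 \<subseteq> J \<and> (\<forall>G. finite G \<and> G \<subseteq> J \<longrightarrow> \<Psi> G) \<and>
       (\<forall>J'. is_ideal R J' \<and> J \<subseteq> J' \<and> (\<forall>G. finite G \<and> G \<subseteq> J' \<longrightarrow> \<Psi> G) \<longrightarrow> J' = J)" ..
      show ?thesis by (rule that[OF JJ[THEN conjunct1] JJ[THEN conjunct2, THEN conjunct1]
        JJ[THEN conjunct2, THEN conjunct2, THEN conjunct1] JJ[THEN conjunct2, THEN conjunct2, THEN conjunct2]])
    qed
    have oneJ: "1 \<notin> J"
    proof
      assume "1 \<in> J"
      then have "\<Psi> {1}" using J3 by simp
      then obtain P where "P \<in> S" "1 \<in> P" unfolding \<Psi>_def by blast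
      then have "P = R" using ideal_one Sid by blast
      then show False using SMx[OF \<open>P \<in> S\<close>] unfolding maximal_ideal_def by blast
    qed
    have ext: "\<exists>Gx. finite Gx \<and> Gx \<subseteq> addgen R J x \<and> \<not> \<Psi> Gx" if x: "x \<in> R" "x \<notin> J" for x
    proof (rule ccontr)
      assume "\<not> (\<exists>Gx. finite Gx \<and> Gx \<subseteq> addgen R J x \<and> \<not> \<Psi> Gx)"
      then have "\<forall>G. finite G \<and> G \<subseteq> addgen R J x \<longrightarrow> \<Psi> G" by blast
      then have "addgen R J x = J" using J4[rule_format, of "addgen R J x"] addgen_ideal[OF R J1 x(1)] by blast
      then show False using addgen_ideal(3)[OF R J1 x(1)] x(2) by blast
    qed
    have Jprime: "prime_ideal R J"
      unfolding prime_ideal_def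
    proof (intro conjI ballI impI)
      show "is_ideal R J" by (rule J1)
      show "J \<noteq> R" using oneJ subringD(2)[OF R] by blast
      fix x y assume xy: "x \<in> R" "y \<in> R" "x * y \<in> J"
      show "x \<in> J \<or> y \<in> J"
      proof (rule ccontr)
        assume "\<not> (x \<in> J \<or> y \<in> J)"
        then have n: "x \<notin> J" "y \<notin> J" by auto
        obtain Gx where Gx: "finite Gx" "Gx \<subseteq> addgen R J x" "\<not> \<Psi> Gx" using ext[OF xy(1) n(1)] by blast
        obtain Gy where Gy: "finite Gy" "Gy \<subseteq> addgen R J y" "\<not> \<Psi> Gy" using ext[OF xy(2) n(2)] by blast
        obtain Hx where Hx: "finite Hx" "Hx \<subseteq> J" "\<forall>P. is_ideal R P \<and> Hx \<subseteq> P \<and> x \<in> P \<longrightarrow> Gx \<subseteq> P"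
          using addgen_fin[OF R Gx(1) Gx(2)] by blast
        obtain Hy where Hy: "finite Hy" "Hy \<subseteq> J" "\<forall>P. is_ideal R P \<and> Hy \<subseteq> P \<and> y \<in> P \<longrightarrow> Gy \<subseteq> P"
          using addgen_fin[OF R Gy(1) Gy(2)] by blast
        have "finite (insert (x * y) (Hx \<union> Hy))" "insert (x * y) (Hx \<union> Hy) \<subseteq> J" using Hx Hy xy(3) by auto
        then have "\<Psi> (insert (x * y) (Hx \<union> Hy))" using J3 by blast
        then obtain P where P: "P \<in> S" "insert (x * y) (Hx \<union> Hy) \<subseteq> P" unfolding \<Psi>_def by blast
        have PP: "prime_ideal R P" using SSp[OF P(1)] unfolding Spec_def by simp
        have "x \<in> P \<or> y \<in> P" using prime_idealD(3)[OF PP xy(1) xy(2)] P(2) by blast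
        then show False
        proof
          assume "x \<in> P"
          then have "Gx \<subseteq> P" using Hx(3) Sid[OF P(1)] P(2) by blast
          then show False using Gx(3) P(1) unfolding \<Psi>_def by blast
        next
          assume "y \<in> P"
          then have "Gy \<subseteq> P" using Hy(3) Sid[OF P(1)] P(2) by blast
          then show False using Gy(3) P(1) unfolding \<Psi>_def by blast
        qed
      qed
    qed
    have f0J: "f0 \<in> J"
    proof -
      have "f0 \<in> Ff 0" unfolding Ff_def seq0 by simp
      then have "f0 \<in> UU" unfolding UU_def by blast
      then show ?thesis using UUJ0 J2 by blast
    qed
    obtain M where M: "M \<in> max_ideals R" "J \<subseteq> M" using exists_max[OF R J1 oneJ] by blast
    have JM: "J = M" using prime_nonzero_max[OF AD Jprime M(1) M(2) f0J f0nz] .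
    have JS: "J \<in> S"
    proof (rule ccontr)
      assume nS: "J \<notin> S"
      have op: "openin ?X (topspace ?X - S)" using Scl unfolding closedin_def by blast
      have "J \<in> topspace ?X - S" using nS M(1) JM topspace_max[OF R] by simp
      then obtain G where G: "finite G" "G \<subseteq> J" "Vz R G \<inter> max_ideals R \<subseteq> topspace ?X - S"
        using max_open_nbhd[OF R op] by blast
      then have "\<Psi> G" using J3 by blast
      then obtain P where P: "P \<in> S" "G \<subseteq> P" unfolding \<Psi>_def by blast
      then have "P \<in> Vz R G \<inter> max_ideals R" using SSp SM unfolding Vz_def by blast
      then show False using G(3) P(1) by blast
    qed
    then obtain n where n: "J = s n" using rs by blast
    have "Ff (Suc n) \<subseteq> UU" unfolding UU_def by blast
    then have "Ff (Suc n) \<subseteq> s n" using UUJ0 J2 n by blast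
    then show False using FfS(2) by blast
  qed
  then show ?thesis unfolding scattered_space_def using S_in by simp
qed

theorem proposition5p5:
  fixes R :: "'k::field set"
  assumes "almost_Dedekind R" and "has_quotient_field_UNIV R"
  shows "(countable (max_ideals R) \<longrightarrow> scattered_space (max_space R))
       \<and> (scattered_space (max_space R) \<longrightarrow> SP_scattered R)"
  using parta[OF assms(1)] partb[OF assms(1)] by blast

end
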